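(* Let $a\in\mathbb{D}$, $b_a(z)=\frac{z-a}{1-\bar a z}$, $N\in\mathbb{N}$, and let $A$ be a linear operator on $K^2_{b_a^N}$. Then $A\in\mathcal{T}(b_a^N)$ if and only if for every $1\leqslant n\leqslant N$ the operator $A_n=P_nA|_{K^2_{b_a^n}}$ satisfies $C_{b_a^n}A_nC_{b_a^n}=A_n^*$, where $P_n\colon K^2_{b_a^N}\to K^2_{b_a^n}$ is the orthogonal projection.
   Context: For an inner function $\theta$, $K^2_\theta=H^2\ominus\theta H^2$, $P_\theta$ the orthogonal projection of $L^2(\mathbb{T})$ onto $K^2_\theta$, $C_\theta f(z)=\theta(z)\overline{zf(z)}$ on $|z|=1$ (a conjugation on $K^2_\theta$). For $\varphi\in L^2$, $A^\theta_\varphi f=P_\theta(\varphi f)$ for $f\in K^2_\theta$ with $\varphi f\in L^2$; $\mathcal{T}(\theta)$ is the set of all bounded truncated Toeplitz operators $A^\theta_\varphi$ on $K^2_\theta$. *)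

theory Defs
  imports "HOL-Analysis.Analysis"
begin

text \<open>
  Model: L^2(T) is represented, via the (unitary) Fourier transform, by the space
  of square-summable sequences indexed by the integers; the element f of L^2(T)
  corresponds to its Fourier coefficient sequence (n |-> hat f(n)), where the
  coefficient at n belongs to the character e^{int}.  Pointwise multiplication of
  functions corresponds to convolution of coefficient sequences, complex conjugation
  to n |-> cnj (f (-n)), multiplication by z to the shift n |-> f (n - 1).
\<close>

type_synonym seq = "int \<Rightarrow> complex"

definition L2 :: "seq set" where
  "L2 = {f. (\<lambda>n. (cmod (f n))\<^sup>2) summable_on UNIV}"

definition ip :: "seq \<Rightarrow> seq \<Rightarrow> complex" where
  "ip f g = (\<Sum>\<^sub>\<infinity>n. f n * cnj (g n))"

definition l2norm :: "seq \<Rightarrow> real" where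
  "l2norm f = sqrt (\<Sum>\<^sub>\<infinity>n. (cmod (f n))\<^sup>2)"

definition mult :: "seq \<Rightarrow> seq \<Rightarrow> seq" where
  "mult \<phi> f = (\<lambda>n. \<Sum>\<^sub>\<infinity>k. \<phi> k * f (n - k))"

definition fourier_coeff :: "(complex \<Rightarrow> complex) \<Rightarrow> seq" where
  "fourier_coeff F = (\<lambda>n. integral {0..2*pi} (\<lambda>t. F (cis t) * cis (- (of_int n * t))) / (2 * pi))"

definition H2 :: "seq set" where
  "H2 = {f \<in> L2. \<forall>n<0. f n = 0}"

definition K2 :: "seq \<Rightarrow> seq set" where
  "K2 \<theta> = {f \<in> H2. \<forall>h \<in> H2. ip f (mult \<theta> h) = 0}"

definition proj :: "seq set \<Rightarrow> seq \<Rightarrow> seq" where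
  "proj S f = (SOME g. g \<in> S \<and> (\<forall>h \<in> S. ip (\<lambda>n. f n - g n) h = 0))"

text \<open>Conjugation C_theta f = theta * conj (z f) on the circle.\<close>
definition conjC :: "seq \<Rightarrow> seq \<Rightarrow> seq" where
  "conjC \<theta> f = mult \<theta> (\<lambda>n. cnj (f (- n - 1)))"

definition adjoint_on :: "seq set \<Rightarrow> (seq \<Rightarrow> seq) \<Rightarrow> seq \<Rightarrow> seq" where
  "adjoint_on S T g = (SOME h. h \<in> S \<and> (\<forall>f \<in> S. ip (T f) g = ip f h))"

definition linear_operator_on :: "seq set \<Rightarrow> (seq \<Rightarrow> seq) \<Rightarrow> bool" where
  "linear_operator_on S A \<longleftrightarrow> (\<forall>f \<in> S. A f \<in> S) \<and>
     (\<forall>f \<in> S. \<forall>g \<in> S. \<forall>c. A (\<lambda>n. c * f n + g n) = (\<lambda>n. c * A f n + A g n))"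

text \<open>A is a bounded truncated Toeplitz operator on K^2_theta: A is the bounded operator
  on K^2_theta agreeing with A^theta_phi f = P_theta (phi f) on its (dense) domain
  {f in K^2_theta. phi f in L^2}, for some symbol phi in L^2.\<close>
definition TTO :: "seq \<Rightarrow> (seq \<Rightarrow> seq) \<Rightarrow> bool" where
  "TTO \<theta> A \<longleftrightarrow>
     (\<exists>\<phi> \<in> L2.
        (\<forall>f \<in> K2 \<theta>. mult \<phi> f \<in> L2 \<longrightarrow> A f = proj (K2 \<theta>) (mult \<phi> f)) \<and>
        (\<forall>f \<in> K2 \<theta>. \<forall>\<epsilon>>0. \<exists>g \<in> K2 \<theta>. mult \<phi> g \<in> L2 \<and> l2norm (\<lambda>n. f n - g n) < \<epsilon>) \<and>
        (\<exists>M. \<forall>f \<in> K2 \<theta>. l2norm (A f) \<le> M * l2norm f))"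

definition blaschke :: "complex \<Rightarrow> complex \<Rightarrow> complex" where
  "blaschke a z = (z - a) / (1 - cnj a * z)"

definition bpow :: "complex \<Rightarrow> nat \<Rightarrow> seq" where
  "bpow a n = fourier_coeff (\<lambda>z. blaschke a z ^ n)"

end

theory Submission
  imports Defs
begin


definition l1 :: "seq \<Rightarrow> bool" where "l1 f \<longleftrightarrow> (\<lambda>n. cmod (f n)) summable_on UNIV"
definition Jc :: "seq \<Rightarrow> seq" where "Jc f = (\<lambda>n. cnj (f (-n)))"
definition dlt :: seq where "dlt = (\<lambda>n. if n = 0 then 1 else 0)"
definition nsq :: "seq \<Rightarrow> real" where "nsq f = (\<Sum>\<^sub>\<infinity>n. (cmod (f n))\<^sup>2)"
definition n1 :: "seq \<Rightarrow> real" where "n1 f = (\<Sum>\<^sub>\<infinity>n. cmod (f n))"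

lemma L2_iff: "f \<in> L2 \<longleftrightarrow> (\<lambda>n. (cmod (f n))\<^sup>2) summable_on UNIV"
  by (simp add: L2_def)

lemma L2_sq_le: assumes "f \<in> L2" shows "(cmod (f n))\<^sup>2 \<le> nsq f"
proof -
  have "sum (\<lambda>m. (cmod (f m))\<^sup>2) {n} \<le> nsq f"
    unfolding nsq_def using assms unfolding L2_def
    by (intro finite_sum_le_infsum) auto
  thus ?thesis by simp
qed

lemma nsq_nonneg: "nsq f \<ge> 0"
  unfolding nsq_def by (intro infsum_nonneg) auto

lemma L2_bound: assumes "f \<in> L2" shows "cmod (f n) \<le> sqrt (nsq f)"
  using L2_sq_le[OF assms, of n] real_le_rsqrt by blast

lemma l1_bound: assumes "l1 f" shows "cmod (f n) \<le> n1 f"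
proof -
  have "sum (\<lambda>m. cmod (f m)) {n} \<le> n1 f"
    unfolding n1_def using assms unfolding l1_def
    by (intro finite_sum_le_infsum) auto
  thus ?thesis by simp
qed

lemma n1_nonneg: "n1 f \<ge> 0"
  unfolding n1_def by (intro infsum_nonneg) auto

lemma l1_L2: assumes "l1 f" shows "f \<in> L2"
proof -
  have "(\<lambda>n. n1 f * cmod (f n)) summable_on UNIV"
    using assms unfolding l1_def by (intro summable_on_cmult_right) auto
  moreover have "(cmod (f n))\<^sup>2 \<le> n1 f * cmod (f n)" for n
    using l1_bound[OF assms, of n] by (simp add: power2_eq_square mult_right_mono)
  ultimately show ?thesis unfolding L2_def
    by (auto intro: summable_on_comparison_test)
qed

lemma L2_shift: assumes "f \<in> L2" shows "(\<lambda>n. f (n + c)) \<in> L2" "nsq (\<lambda>n. f (n + c)) = nsq f"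
proof -
  have b: "bij_betw (\<lambda>n. n + c) UNIV UNIV"
    by (rule bij_betwI[where g="\<lambda>n. n - c"]) auto
  show "(\<lambda>n. f (n + c)) \<in> L2" using assms unfolding L2_def
    using summable_on_reindex_bij_betw[OF b, of "\<lambda>n. (cmod (f n))\<^sup>2"] by simp
  show "nsq (\<lambda>n. f (n + c)) = nsq f" unfolding nsq_def
    using infsum_reindex_bij_betw[OF b, of "\<lambda>n. (cmod (f n))\<^sup>2"] by simp
qed

lemma L2_shift': assumes "f \<in> L2" shows "(\<lambda>n. f (n - c)) \<in> L2" "nsq (\<lambda>n. f (n - c)) = nsq f"
  using L2_shift[OF assms, of "-c"] by simp_all

lemma prod_le_sq: "cmod x * cmod y \<le> (cmod x)\<^sup>2 + (cmod y)\<^sup>2"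
proof -
  have "2 * (cmod x * cmod y) \<le> (cmod x)\<^sup>2 + (cmod y)\<^sup>2"
    using sum_squares_bound[of "cmod x" "cmod y"] by simp
  moreover have "0 \<le> cmod x * cmod y" by simp
  ultimately show ?thesis by linarith
qed

lemma L2_prod_abs: assumes "x \<in> L2" "y \<in> L2"
  shows "(\<lambda>n. cmod (x n) * cmod (y n)) summable_on UNIV"
    and "(\<Sum>\<^sub>\<infinity>n. cmod (x n) * cmod (y n)) \<le> nsq x + nsq y"
proof -
  have s: "(\<lambda>n. (cmod (x n))\<^sup>2 + (cmod (y n))\<^sup>2) summable_on UNIV"
    using assms unfolding L2_iff by (intro summable_on_add)
  show "(\<lambda>n. cmod (x n) * cmod (y n)) summable_on UNIV"
    by (rule summable_on_comparison_test[OF s]) (auto simp: prod_le_sq)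
  hence "(\<Sum>\<^sub>\<infinity>n. cmod (x n) * cmod (y n)) \<le> (\<Sum>\<^sub>\<infinity>n. (cmod (x n))\<^sup>2 + (cmod (y n))\<^sup>2)"
    by (intro infsum_mono s) (auto simp: prod_le_sq)
  also have "\<dots> = nsq x + nsq y" unfolding nsq_def
    using assms unfolding L2_iff by (intro infsum_add)
  finally show "(\<Sum>\<^sub>\<infinity>n. cmod (x n) * cmod (y n)) \<le> nsq x + nsq y" .
qed

lemma L2_ip_summable: assumes "x \<in> L2" "y \<in> L2"
  shows "(\<lambda>n. x n * cnj (y n)) summable_on UNIV"
  using L2_prod_abs(1)[OF assms]
  by (simp add: summable_on_iff_abs_summable_on_complex norm_mult)

lemma L2_lin: assumes "x \<in> L2" "y \<in> L2" shows "(\<lambda>n. c * x n + y n) \<in> L2"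
proof -
  have "(cmod (c * x n + y n))\<^sup>2 \<le> 2 * (cmod c)\<^sup>2 * (cmod (x n))\<^sup>2 + 2 * (cmod (y n))\<^sup>2" for n
  proof -
    have "cmod (c * x n + y n) \<le> cmod c * cmod (x n) + cmod (y n)"
      by (metis norm_mult norm_triangle_ineq)
    hence "(cmod (c * x n + y n))\<^sup>2 \<le> (cmod c * cmod (x n) + cmod (y n))\<^sup>2"
      by (simp add: power_mono)
    also have "\<dots> \<le> 2 * (cmod c * cmod (x n))\<^sup>2 + 2 * (cmod (y n))\<^sup>2"
    proof -
      have "\<And>X Y::real. (X + Y)\<^sup>2 \<le> 2 * X\<^sup>2 + 2 * Y\<^sup>2"
      proof -
        fix X Y :: real
        have "(X + Y)\<^sup>2 + (X - Y)\<^sup>2 = 2 * X\<^sup>2 + 2 * Y\<^sup>2" by algebra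
        moreover have "(X - Y)\<^sup>2 \<ge> 0" by simp
        ultimately show "(X + Y)\<^sup>2 \<le> 2 * X\<^sup>2 + 2 * Y\<^sup>2" by linarith
      qed
      thus ?thesis .
    qed
    also have "\<dots> = 2 * (cmod c)\<^sup>2 * (cmod (x n))\<^sup>2 + 2 * (cmod (y n))\<^sup>2"
      by (simp add: power_mult_distrib)
    finally show ?thesis .
  qed
  moreover have "(\<lambda>n. 2 * (cmod c)\<^sup>2 * (cmod (x n))\<^sup>2 + 2 * (cmod (y n))\<^sup>2) summable_on UNIV"
    using assms unfolding L2_iff by (intro summable_on_add summable_on_cmult_right)
  ultimately show ?thesis unfolding L2_def
    by (auto intro: summable_on_comparison_test)
qed

lemma L2_zero: "(\<lambda>n. 0) \<in> L2" unfolding L2_def by simp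

lemma L2_scale: "x \<in> L2 \<Longrightarrow> (\<lambda>n. c * x n) \<in> L2"
  using L2_lin[OF _ L2_zero, of x c] by simp

lemma L2_add: "x \<in> L2 \<Longrightarrow> y \<in> L2 \<Longrightarrow> (\<lambda>n. x n + y n) \<in> L2"
  using L2_lin[of x y 1] by simp

lemma L2_diff: "x \<in> L2 \<Longrightarrow> y \<in> L2 \<Longrightarrow> (\<lambda>n. x n - y n) \<in> L2"
  using L2_lin[of y x "-1"] by simp



lemma sigma_nonneg_iff:
  fixes F :: "int \<times> int \<Rightarrow> real"
  assumes "\<And>p. F p \<ge> 0"
  shows "F summable_on UNIV \<longleftrightarrow>
     (\<forall>x. (\<lambda>y. F (x,y)) summable_on UNIV) \<and> (\<lambda>x. \<Sum>\<^sub>\<infinity>y. F (x,y)) summable_on UNIV"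
proof -
  have nF: "norm (F p) = F p" for p using assms[of p] by simp
  have nF': "(\<lambda>p. norm (F p)) = F" by (rule ext) (rule nF)
  have "F summable_on UNIV \<longleftrightarrow> (\<lambda>p. norm (F p)) summable_on Sigma UNIV (\<lambda>_. UNIV)"
    by (simp only: nF' UNIV_Times_UNIV)
  also have "\<dots> \<longleftrightarrow> (\<forall>x\<in>UNIV. (\<lambda>y. norm (F (x, y))) summable_on UNIV) \<and>
             ((\<lambda>x. norm (infsum (\<lambda>y. norm (F (x, y))) UNIV)) summable_on UNIV)"
    by (rule Infinite_Sum.abs_summable_on_Sigma_iff)
  also have "\<dots> \<longleftrightarrow> (\<forall>x. (\<lambda>y. F (x,y)) summable_on UNIV) \<and> (\<lambda>x. \<Sum>\<^sub>\<infinity>y. F (x,y)) summable_on UNIV"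
  proof -
    have "norm (infsum (\<lambda>y. F (x, y)) UNIV) = infsum (\<lambda>y. F (x, y)) UNIV" for x
      using infsum_nonneg[of UNIV "\<lambda>y. F (x,y)"] assms by simp
    moreover have "\<bar>F p\<bar> = F p" for p using assms[of p] by simp
    ultimately show ?thesis by simp
  qed
  finally show ?thesis .
qed

lemma bij_pair: "bij_betw (\<lambda>(n::int, i::int). (i, n - i)) UNIV UNIV"
  by (rule bij_betwI[where g="\<lambda>(i, j). (i + j, i)"]) auto

lemma bij_swap: "bij_betw (\<lambda>(n::int, i::int). (i, n)) UNIV UNIV"
  by (rule bij_betwI[where g="\<lambda>(i, j). (j, i)"]) auto

lemma bij_refl: "bij_betw (\<lambda>k::int. c - k) UNIV UNIV"
  by (rule bij_betwI[where g="\<lambda>k. c - k"]) auto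

lemma bij_shift: "bij_betw (\<lambda>k::int. k + c) UNIV UNIV"
  by (rule bij_betwI[where g="\<lambda>k. k - c"]) auto

lemma swap_summable:
  fixes F :: "int \<times> int \<Rightarrow> 'b::real_normed_vector"
  shows "(\<lambda>(n,i). F (i,n)) summable_on UNIV \<longleftrightarrow> F summable_on UNIV"
proof -
  have "(\<lambda>(n,i). F (i,n)) = (\<lambda>x. F ((\<lambda>(n, i). (i, n)) x))" by (auto simp: fun_eq_iff)
  thus ?thesis using summable_on_reindex_bij_betw[OF bij_swap, of F] by simp
qed

lemma prod_abs_summable:
  assumes "l1 f" "l1 g"
  shows "(\<lambda>(i,j). cmod (f i) * cmod (g j)) summable_on UNIV"
proof -
  have "(\<lambda>j. cmod (f i) * cmod (g j)) summable_on UNIV" for i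
    using assms(2) unfolding l1_def by (intro summable_on_cmult_right)
  moreover have "(\<lambda>i. \<Sum>\<^sub>\<infinity>j. cmod (f i) * cmod (g j)) summable_on UNIV"
  proof -
    have "(\<lambda>i. cmod (f i) * n1 g) summable_on UNIV"
      using assms(1) unfolding l1_def by (intro summable_on_cmult_left)
    moreover have "(\<Sum>\<^sub>\<infinity>j. cmod (f i) * cmod (g j)) = cmod (f i) * n1 g" for i
      unfolding n1_def by (rule infsum_cmult_right')
    ultimately show ?thesis by simp
  qed
  ultimately show ?thesis
    using sigma_nonneg_iff[of "\<lambda>(i,j). cmod (f i) * cmod (g j)"] by auto
qed

lemma conv_abs_summable:
  assumes "l1 f" "l1 g"
  shows "(\<lambda>(n,i). cmod (f i) * cmod (g (n - i))) summable_on UNIV"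
proof -
  have "(\<lambda>(n,i). cmod (f i) * cmod (g (n - i))) = (\<lambda>x. (\<lambda>(i,j). cmod (f i) * cmod (g j)) ((\<lambda>(n, i). (i, n - i)) x))"
    by (auto simp: fun_eq_iff)
  thus ?thesis using summable_on_reindex_bij_betw[OF bij_pair, of "\<lambda>(i,j). cmod (f i) * cmod (g j)"]
    prod_abs_summable[OF assms] by simp
qed

lemma conv_abs_inner:
  assumes "l1 f" "l1 g"
  shows "(\<lambda>i. cmod (f i) * cmod (g (n - i))) summable_on UNIV"
    and "(\<lambda>n. \<Sum>\<^sub>\<infinity>i. cmod (f i) * cmod (g (n - i))) summable_on UNIV"
  using conv_abs_summable[OF assms] sigma_nonneg_iff[of "\<lambda>(n,i). cmod (f i) * cmod (g (n - i))"]
  by auto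

lemma mult_l1:
  assumes "l1 f" "l1 g" shows "l1 (mult f g)"
proof -
  have "cmod (mult f g n) \<le> (\<Sum>\<^sub>\<infinity>i. cmod (f i) * cmod (g (n - i)))" for n
    unfolding mult_def
    using norm_infsum_bound[of "\<lambda>i. f i * g (n - i)" UNIV] conv_abs_inner(1)[OF assms, of n]
    by (simp add: norm_mult)
  thus ?thesis unfolding l1_def
    by (intro summable_on_comparison_test[OF conv_abs_inner(2)[OF assms]])
       (auto intro: infsum_nonneg)
qed

lemma mult_comm: "mult f g = mult g f"
proof
  fix n
  show "mult f g n = mult g f n"
    unfolding mult_def
    by (rule infsum_reindex_bij_witness[where i="\<lambda>k. n - k" and j="\<lambda>k. n - k"]) auto
qed

lemma mult_bounded:
  assumes "l1 f" "\<And>n. cmod (h n) \<le> H"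
  shows "(\<lambda>k. cmod (f k * h (n - k))) summable_on UNIV"
    and "cmod (mult f h n) \<le> n1 f * H"
proof -
  have H: "H \<ge> 0" using assms(2)[of 0] norm_ge_zero order_trans by blast
  have s: "(\<lambda>k. cmod (f k) * H) summable_on UNIV"
    using assms(1) unfolding l1_def by (intro summable_on_cmult_left)
  have le: "cmod (f k * h (n - k)) \<le> cmod (f k) * H" for k
    by (simp add: norm_mult mult_left_mono assms(2))
  show "(\<lambda>k. cmod (f k * h (n - k))) summable_on UNIV"
    by (rule summable_on_comparison_test[OF s]) (auto simp: le)
  hence "cmod (mult f h n) \<le> (\<Sum>\<^sub>\<infinity>k. cmod (f k * h (n - k)))"
    unfolding mult_def by (rule norm_infsum_bound)
  also have "\<dots> \<le> (\<Sum>\<^sub>\<infinity>k. cmod (f k) * H)"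
    by (intro infsum_mono s \<open>(\<lambda>k. cmod (f k * h (n - k))) summable_on UNIV\<close> le)
  also have "\<dots> = n1 f * H" unfolding n1_def by (rule infsum_cmult_left')
  finally show "cmod (mult f h n) \<le> n1 f * H" .
qed

lemma mult_assoc:
  assumes "l1 f" "l1 g" "\<And>n. cmod (h n) \<le> H"
  shows "mult (mult f g) h = mult f (mult g h)"
proof
  fix n
  have H: "H \<ge> 0" using assms(3)[of 0] norm_ge_zero order_trans by blast
  let ?F = "\<lambda>k i. f i * g (k - i) * h (n - k)"
  have sum2: "(\<lambda>(k,i). ?F k i) summable_on UNIV"
  proof -
    have s: "(\<lambda>(k,i). H * (cmod (f i) * cmod (g (k - i)))) summable_on UNIV"
      using summable_on_cmult_right[OF conv_abs_summable[OF assms(1,2)], of H]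
      by (simp add: case_prod_unfold)
    have b: "norm (?F k i) \<le> norm (H * (cmod (f i) * cmod (g (k - i))))" for k i
    proof -
      have "norm (?F k i) = cmod (f i) * cmod (g (k - i)) * cmod (h (n - k))"
        by (simp add: norm_mult)
      also have "\<dots> \<le> cmod (f i) * cmod (g (k - i)) * H"
        by (intro mult_left_mono assms(3)) auto
      finally show ?thesis using H by (simp add: mult.commute)
    qed
    have "(\<lambda>p. norm ((\<lambda>(k,i). ?F k i) p)) summable_on UNIV"
      apply (rule summable_on_comparison_test[OF s])
       apply (clarsimp simp only: split_paired_all case_prod_conv)
       apply (metis b real_norm_def abs_of_nonneg H mult_nonneg_nonneg norm_ge_zero)
      apply simp
      done
    thus ?thesis by (rule abs_summable_summable)
  qed
  have "mult (mult f g) h n = (\<Sum>\<^sub>\<infinity>k. \<Sum>\<^sub>\<infinity>i. ?F k i)"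
    unfolding mult_def by (simp add: infsum_cmult_left')
  also have "\<dots> = (\<Sum>\<^sub>\<infinity>i. \<Sum>\<^sub>\<infinity>k. ?F k i)"
    using sum2 by (intro infsum_swap_banach) (simp add: case_prod_beta)
  also have "\<dots> = (\<Sum>\<^sub>\<infinity>i. f i * (\<Sum>\<^sub>\<infinity>k. g (k - i) * h (n - k)))"
    by (simp add: infsum_cmult_right'[symmetric] mult.assoc)
  also have "\<dots> = (\<Sum>\<^sub>\<infinity>i. f i * (\<Sum>\<^sub>\<infinity>j. g j * h (n - i - j)))"
  proof -
    have "(\<Sum>\<^sub>\<infinity>k. g (k - i) * h (n - k)) = (\<Sum>\<^sub>\<infinity>j. g j * h (n - i - j))" for i
      by (rule infsum_reindex_bij_witness[where i="\<lambda>j. j + i" and j="\<lambda>k. k - i"]) auto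
    thus ?thesis by simp
  qed
  also have "\<dots> = mult f (mult g h) n" unfolding mult_def by simp
  finally show "mult (mult f g) h n = mult f (mult g h) n" .
qed



lemma L2_refl: assumes "x \<in> L2" shows "(\<lambda>k. x (c - k)) \<in> L2"
  using assms unfolding L2_iff
  using summable_on_reindex_bij_betw[OF bij_refl, of "\<lambda>n. (cmod (x n))\<^sup>2" c] by simp

lemma conv_summable_L2: assumes "f \<in> L2" "x \<in> L2"
  shows "(\<lambda>k. f k * x (n - k)) summable_on UNIV"
proof -
  have "(\<lambda>k. cmod (f k) * cmod (x (n - k))) summable_on UNIV"
    by (rule L2_prod_abs(1)[OF assms(1) L2_refl[OF assms(2)]])
  thus ?thesis by (simp add: summable_on_iff_abs_summable_on_complex norm_mult)
qed

lemma mult_lin2: assumes "f \<in> L2" "x \<in> L2" "y \<in> L2"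
  shows "mult f (\<lambda>n. c * x n + y n) = (\<lambda>n. c * mult f x n + mult f y n)"
proof
  fix n
  have "mult f (\<lambda>n. c * x n + y n) n = (\<Sum>\<^sub>\<infinity>k. c * (f k * x (n - k)) + f k * y (n - k))"
    unfolding mult_def by (simp add: algebra_simps)
  also have "\<dots> = (\<Sum>\<^sub>\<infinity>k. c * (f k * x (n - k))) + (\<Sum>\<^sub>\<infinity>k. f k * y (n - k))"
    by (intro infsum_add summable_on_cmult_right conv_summable_L2 assms)
  also have "\<dots> = c * mult f x n + mult f y n"
    unfolding mult_def by (simp add: infsum_cmult_right')
  finally show "mult f (\<lambda>n. c * x n + y n) n = c * mult f x n + mult f y n" .
qed

lemma mult_lin1: assumes "f \<in> L2" "g \<in> L2" "x \<in> L2"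
  shows "mult (\<lambda>n. c * f n + g n) x = (\<lambda>n. c * mult f x n + mult g x n)"
  using mult_lin2[OF assms(3,1,2)] by (simp add: mult_comm)

lemma mult_zero2: "mult f (\<lambda>n. 0) = (\<lambda>n. 0)"
  unfolding mult_def by simp

lemma mult_zero1: "mult (\<lambda>n. 0) f = (\<lambda>n. 0)"
  unfolding mult_def by simp

lemma mult_dlt: "mult dlt x = x"
proof
  fix n
  have "mult dlt x n = (\<Sum>\<^sub>\<infinity>k\<in>{0}. dlt k * x (n - k))"
    unfolding mult_def by (intro infsum_cong_neutral) (auto simp: dlt_def)
  thus "mult dlt x n = x n" by (simp add: dlt_def)
qed

lemma mult_dlt2: "mult x dlt = x"
  by (simp add: mult_comm mult_dlt)

definition tp :: "complex \<Rightarrow> complex \<Rightarrow> seq" where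
  "tp p q = (\<lambda>k. if k = 0 then p else if k = 1 then q else 0)"

lemma mult_tp: "mult (tp p q) x n = p * x n + q * x (n - 1)"
proof -
  have "mult (tp p q) x n = (\<Sum>\<^sub>\<infinity>k\<in>{0,1}. tp p q k * x (n - k))"
    unfolding mult_def by (intro infsum_cong_neutral) (auto simp: tp_def)
  thus ?thesis by (simp add: tp_def)
qed

lemma l1_tp: "l1 (tp p q)"
proof -
  have "(\<lambda>n. cmod (tp p q n)) summable_on {0,1}" by simp
  thus ?thesis unfolding l1_def
    by (rule summable_on_cong_neutral[THEN iffD1, rotated -1]) (auto simp: tp_def)
qed

lemma l1_dlt: "l1 dlt"
proof -
  have "dlt = tp 1 0" by (auto simp: dlt_def tp_def)
  show ?thesis by (subst \<open>dlt = tp 1 0\<close>) (rule l1_tp)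
qed

lemma Jc_Jc: "Jc (Jc f) = f" unfolding Jc_def by simp

lemma Jc_l1: assumes "l1 f" shows "l1 (Jc f)"
  using assms unfolding l1_def Jc_def
  using summable_on_reindex_bij_betw[OF bij_refl, of "\<lambda>n. cmod (f n)" 0] by simp

lemma Jc_mult: "Jc (mult f g) = mult (Jc f) (Jc g)"
proof
  fix n
  have "Jc (mult f g) n = (\<Sum>\<^sub>\<infinity>k. cnj (f k) * cnj (g (- n - k)))"
    unfolding Jc_def mult_def by (subst infsum_cnj[symmetric]) simp
  also have "\<dots> = (\<Sum>\<^sub>\<infinity>k. cnj (f (- k)) * cnj (g (- n - (- k))))"
    by (rule infsum_reindex_bij_witness[where i="\<lambda>k. - k" and j="\<lambda>k. - k"]) auto
  also have "\<dots> = mult (Jc f) (Jc g) n" unfolding Jc_def mult_def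
    by (intro infsum_cong) (simp add: algebra_simps)
  finally show "Jc (mult f g) n = mult (Jc f) (Jc g) n" .
qed

lemma Jc_dlt: "Jc dlt = dlt" unfolding Jc_def dlt_def by auto

lemma l1_bounded: "l1 f \<Longrightarrow> cmod (f n) \<le> n1 f" by (rule l1_bound)

lemma L2_bounded': "f \<in> L2 \<Longrightarrow> cmod (f n) \<le> sqrt (nsq f)" by (rule L2_bound)

lemma wcs:
  fixes w a :: "int \<Rightarrow> real"
  assumes w0: "\<And>i. w i \<ge> 0" and a0: "\<And>i. a i \<ge> 0"
    and sw: "w summable_on UNIV" and swa: "(\<lambda>i. w i * a i) summable_on UNIV"
    and swa2: "(\<lambda>i. w i * (a i)\<^sup>2) summable_on UNIV"
  shows "(\<Sum>\<^sub>\<infinity>i. w i * a i)\<^sup>2 \<le> (\<Sum>\<^sub>\<infinity>i. w i) * (\<Sum>\<^sub>\<infinity>i. w i * (a i)\<^sup>2)"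
proof -
  define S1 where "S1 = (\<Sum>\<^sub>\<infinity>i. w i * a i)"
  define W where "W = (\<Sum>\<^sub>\<infinity>i. w i)"
  define S2 where "S2 = (\<Sum>\<^sub>\<infinity>i. w i * (a i)\<^sup>2)"
  have S10: "S1 \<ge> 0" unfolding S1_def by (intro infsum_nonneg) (simp add: w0 a0)
  have W0: "W \<ge> 0" unfolding W_def by (intro infsum_nonneg) (simp add: w0)
  have S20: "S2 \<ge> 0" unfolding S2_def by (intro infsum_nonneg) (simp add: w0)
  have key: "S1 \<le> S2 / (2 * t) + t * W / 2" if t: "t > 0" for t
  proof -
    have pt: "w i * a i \<le> w i * (a i)\<^sup>2 / (2 * t) + t * w i / 2" for i
    proof -
      have "2 * t * a i \<le> (a i)\<^sup>2 + t\<^sup>2"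
        using sum_squares_bound[of t "a i"] by (simp add: mult.commute)
      hence "a i \<le> (a i)\<^sup>2 / (2 * t) + t / 2"
        using t by (simp add: field_simps power2_eq_square)
      hence "w i * a i \<le> w i * ((a i)\<^sup>2 / (2 * t) + t / 2)"
        by (intro mult_left_mono w0)
      thus ?thesis by (simp add: algebra_simps)
    qed
    have s1: "(\<lambda>i. w i * (a i)\<^sup>2 / (2 * t)) summable_on UNIV"
      using summable_on_cmult_left[OF swa2, of "1 / (2 * t)"] by simp
    have s2: "(\<lambda>i. t * w i / 2) summable_on UNIV"
      using summable_on_cmult_left[OF sw, of "t / 2"] by (simp add: mult.commute)
    have "S1 \<le> (\<Sum>\<^sub>\<infinity>i. w i * (a i)\<^sup>2 / (2 * t) + t * w i / 2)"
      unfolding S1_def by (intro infsum_mono swa summable_on_add s1 s2 pt)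
    also have "\<dots> = (\<Sum>\<^sub>\<infinity>i. w i * (a i)\<^sup>2 / (2 * t)) + (\<Sum>\<^sub>\<infinity>i. t * w i / 2)"
      by (intro infsum_add s1 s2)
    also have "(\<Sum>\<^sub>\<infinity>i. w i * (a i)\<^sup>2 / (2 * t)) = S2 / (2 * t)"
      unfolding S2_def using infsum_cmult_left'[of "\<lambda>i. w i * (a i)\<^sup>2" "1/(2*t)" UNIV] by simp
    also have "(\<Sum>\<^sub>\<infinity>i. t * w i / 2) = t * W / 2"
      unfolding W_def using infsum_cmult_right'[of "t/2" w UNIV] by (simp add: mult.commute)
    finally show ?thesis .
  qed
  have "S1\<^sup>2 \<le> W * S2"
  proof (cases "S2 > 0 \<and> W > 0")
    case True
    define t where "t = sqrt (S2 / W)"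
    have t0: "t > 0" unfolding t_def using True by simp
    have tt: "t * t = S2 / W" unfolding t_def using True by simp
    have "S1 \<le> S2 / (2 * t) + t * W / 2" by (rule key[OF t0])
    also have "S2 / (2 * t) = t * W / 2"
      using tt t0 True by (simp add: field_simps)
    finally have "S1 \<le> t * W" by (simp add: mult.commute)
    hence "S1\<^sup>2 \<le> (t * W)\<^sup>2" using S10 by (simp add: power_mono)
    also have "(t * W)\<^sup>2 = W * S2" using tt True by (simp add: power2_eq_square field_simps)
    finally show ?thesis .
  next
    case False
    hence "S2 = 0 \<or> W = 0" using S20 W0 by auto
    have "S1 \<le> 0"
    proof (rule ccontr)
      assume "\<not> S1 \<le> 0"
      hence S1p: "S1 > 0" by simp
      show False
      proof (cases "S2 = 0")
        case True
        define t where "t = S1 / (W + 1)"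
        have "t > 0" unfolding t_def using S1p W0 by simp
        have "S1 \<le> t * W / 2" using key[OF \<open>t > 0\<close>] True by simp
        also have "\<dots> < S1"
        proof -
          have "0 \<le> S1 * W" using S1p W0 by simp
          hence "S1 * W < 2 * S1 * (W + 1)" using S1p by (simp add: algebra_simps)
          thus ?thesis unfolding t_def using S1p W0 by (simp add: field_simps)
        qed
        finally show False by simp
      next
        case False
        hence W: "W = 0" using \<open>S2 = 0 \<or> W = 0\<close> by simp
        define t where "t = S2 / S1"
        have "t > 0" unfolding t_def using S1p S20 False by simp
        have "S1 \<le> S2 / (2 * t)" using key[OF \<open>t > 0\<close>] W by simp
        also have "\<dots> = S1 / 2" unfolding t_def using S1p False by (simp add: field_simps)
        finally show False using S1p by simp
      qed
    qed
    hence "S1 = 0" using S10 by simp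
    thus ?thesis using W0 S20 by simp
  qed
  thus ?thesis unfolding S1_def W_def S2_def .
qed

lemma young: assumes "l1 f" "x \<in> L2" shows "mult f x \<in> L2"
proof -
  define B where "B = sqrt (nsq x)"
  have xb: "cmod (x n) \<le> B" for n unfolding B_def by (rule L2_bound[OF assms(2)])
  define S2 where "S2 n = (\<Sum>\<^sub>\<infinity>i. cmod (f i) * (cmod (x (n - i)))\<^sup>2)" for n
  have pw: "(cmod (mult f x n))\<^sup>2 \<le> n1 f * S2 n" for n
  proof -
    have sa: "(\<lambda>i. cmod (f i) * cmod (x (n - i))) summable_on UNIV"
      using mult_bounded(1)[OF assms(1) xb, where n=n] by (simp add: norm_mult)
    have sa2: "(\<lambda>i. cmod (f i) * (cmod (x (n - i)))\<^sup>2) summable_on UNIV"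
    proof (rule summable_on_comparison_test)
      show "(\<lambda>i. cmod (f i) * B\<^sup>2) summable_on UNIV"
        using assms(1) unfolding l1_def by (intro summable_on_cmult_left)
      show "cmod (f i) * (cmod (x (n - i)))\<^sup>2 \<le> cmod (f i) * B\<^sup>2" for i
        by (intro mult_left_mono power_mono xb) auto
    qed auto
    have "cmod (mult f x n) \<le> (\<Sum>\<^sub>\<infinity>i. cmod (f i) * cmod (x (n - i)))"
      unfolding mult_def using norm_infsum_bound[of "\<lambda>i. f i * x (n - i)" UNIV] sa
      by (simp add: norm_mult)
    hence "(cmod (mult f x n))\<^sup>2 \<le> (\<Sum>\<^sub>\<infinity>i. cmod (f i) * cmod (x (n - i)))\<^sup>2"
      by (intro power_mono) auto
    also have "\<dots> \<le> n1 f * S2 n" unfolding n1_def S2_def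
      using assms(1) unfolding l1_def
      by (intro wcs sa sa2) auto
    finally show ?thesis .
  qed
  have sS2: "S2 summable_on UNIV"
  proof -
    have "(\<lambda>(i,m). cmod (f i) * (cmod (x m))\<^sup>2) summable_on UNIV"
    proof -
      have "(\<lambda>m. cmod (f i) * (cmod (x m))\<^sup>2) summable_on UNIV" for i
        using assms(2) unfolding L2_iff by (intro summable_on_cmult_right)
      moreover have "(\<lambda>i. \<Sum>\<^sub>\<infinity>m. cmod (f i) * (cmod (x m))\<^sup>2) summable_on UNIV"
      proof -
        have "(\<lambda>i. cmod (f i) * nsq x) summable_on UNIV"
          using assms(1) unfolding l1_def by (intro summable_on_cmult_left)
        moreover have "(\<Sum>\<^sub>\<infinity>m. cmod (f i) * (cmod (x m))\<^sup>2) = cmod (f i) * nsq x" for i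
          unfolding nsq_def by (rule infsum_cmult_right')
        ultimately show ?thesis by simp
      qed
      ultimately show ?thesis
        using sigma_nonneg_iff[of "\<lambda>(i,m). cmod (f i) * (cmod (x m))\<^sup>2"] by auto
    qed
    hence "(\<lambda>(n,i). cmod (f i) * (cmod (x (n - i)))\<^sup>2) summable_on UNIV"
    proof -
      assume h: "(\<lambda>(i,m). cmod (f i) * (cmod (x m))\<^sup>2) summable_on UNIV"
      have "(\<lambda>(n,i). cmod (f i) * (cmod (x (n - i)))\<^sup>2) =
            (\<lambda>p. (\<lambda>(i,m). cmod (f i) * (cmod (x m))\<^sup>2) ((\<lambda>(n, i). (i, n - i)) p))"
        by (auto simp: fun_eq_iff)
      thus ?thesis using summable_on_reindex_bij_betw[OF bij_pair, of "\<lambda>(i,m). cmod (f i) * (cmod (x m))\<^sup>2"] h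
        by simp
    qed
    thus ?thesis unfolding S2_def
      using sigma_nonneg_iff[of "\<lambda>(n,i). cmod (f i) * (cmod (x (n - i)))\<^sup>2"] by auto
  qed
  show ?thesis unfolding L2_iff
  proof (rule summable_on_comparison_test)
    show "(\<lambda>n. n1 f * S2 n) summable_on UNIV" by (intro summable_on_cmult_right sS2)
  qed (use pw in auto)
qed

lemma ip_lin1: assumes "x \<in> L2" "y \<in> L2" "z \<in> L2"
  shows "ip (\<lambda>n. c * x n + y n) z = c * ip x z + ip y z"
proof -
  have "ip (\<lambda>n. c * x n + y n) z = (\<Sum>\<^sub>\<infinity>n. c * (x n * cnj (z n)) + y n * cnj (z n))"
    unfolding ip_def by (simp add: algebra_simps)
  also have "\<dots> = (\<Sum>\<^sub>\<infinity>n. c * (x n * cnj (z n))) + (\<Sum>\<^sub>\<infinity>n. y n * cnj (z n))"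
    by (intro infsum_add summable_on_cmult_right L2_ip_summable assms)
  finally show ?thesis unfolding ip_def by (simp add: infsum_cmult_right')
qed

lemma ip_cnj: "ip y x = cnj (ip x y)"
  unfolding ip_def by (subst infsum_cnj[symmetric]) (simp add: mult.commute)

lemma ip_lin2: assumes "x \<in> L2" "y \<in> L2" "z \<in> L2"
  shows "ip z (\<lambda>n. c * x n + y n) = cnj c * ip z x + ip z y"
  using ip_lin1[OF assms, of c] by (metis complex_cnj_add complex_cnj_mult ip_cnj)

lemma ip_self: assumes "x \<in> L2" shows "ip x x = complex_of_real (nsq x)"
proof -
  have "ip x x = (\<Sum>\<^sub>\<infinity>n. complex_of_real ((cmod (x n))\<^sup>2))"
    unfolding ip_def by (intro infsum_cong) (rule complex_norm_square[symmetric])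
  also have "\<dots> = complex_of_real (nsq x)" unfolding nsq_def
    using assms unfolding L2_iff
    by (intro infsumI has_sum_of_real has_sum_infsum)
  finally show ?thesis .
qed

lemma ip_zero: assumes "x \<in> L2" "ip x x = 0" shows "x = (\<lambda>n. 0)"
proof
  fix n
  have "nsq x = 0" using assms(2) ip_self[OF assms(1)] by simp
  hence "(cmod (x n))\<^sup>2 = 0"
    using assms(1) unfolding nsq_def L2_iff
    by (intro nonneg_infsum_le_0D[of "\<lambda>n. (cmod (x n))\<^sup>2" UNIV]) auto
  thus "x n = 0" by simp
qed

lemma ip_zero_left: "ip (\<lambda>n. 0) y = 0" unfolding ip_def by simp
lemma ip_zero_right: "ip y (\<lambda>n. 0) = 0" unfolding ip_def by simp

lemma mult_adj:
  assumes "l1 f" "x \<in> L2" "y \<in> L2"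
  shows "ip (mult f x) y = ip x (mult (Jc f) y)"
proof -
  define F where "F = (\<lambda>(n,i). f i * x (n - i) * cnj (y n))"
  have absF: "(\<lambda>(i,n). cmod (f i) * (cmod (x (n - i)) * cmod (y n))) summable_on UNIV"
  proof -
    define C where "C = nsq x + nsq y"
    have inner: "(\<lambda>n. cmod (x (n - i)) * cmod (y n)) summable_on UNIV" for i
      by (rule L2_prod_abs(1)[OF L2_shift'(1)[OF assms(2)] assms(3)])
    have innerb: "(\<Sum>\<^sub>\<infinity>n. cmod (x (n - i)) * cmod (y n)) \<le> C" for i
      using L2_prod_abs(2)[OF L2_shift'(1)[OF assms(2)] assms(3)] L2_shift'(2)[OF assms(2)]
      unfolding C_def by simp
    have "(\<lambda>n. cmod (f i) * (cmod (x (n - i)) * cmod (y n))) summable_on UNIV" for i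
      by (intro summable_on_cmult_right inner)
    moreover have "(\<lambda>i. \<Sum>\<^sub>\<infinity>n. cmod (f i) * (cmod (x (n - i)) * cmod (y n))) summable_on UNIV"
    proof (rule summable_on_comparison_test)
      show "(\<lambda>i. cmod (f i) * C) summable_on UNIV"
        using assms(1) unfolding l1_def by (intro summable_on_cmult_left)
      fix i
      have "(\<Sum>\<^sub>\<infinity>n. cmod (f i) * (cmod (x (n - i)) * cmod (y n))) =
            cmod (f i) * (\<Sum>\<^sub>\<infinity>n. cmod (x (n - i)) * cmod (y n))"
        by (rule infsum_cmult_right')
      also have "\<dots> \<le> cmod (f i) * C" by (intro mult_left_mono innerb) auto
      finally show "(\<Sum>\<^sub>\<infinity>n. cmod (f i) * (cmod (x (n - i)) * cmod (y n))) \<le> cmod (f i) * C" .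
      show "0 \<le> (\<Sum>\<^sub>\<infinity>n. cmod (f i) * (cmod (x (n - i)) * cmod (y n)))"
        by (intro infsum_nonneg) auto
    qed
    ultimately show ?thesis
      using sigma_nonneg_iff[of "\<lambda>(i,n). cmod (f i) * (cmod (x (n - i)) * cmod (y n))"] by auto
  qed
  have sF: "F summable_on UNIV"
  proof -
    have "(\<lambda>(n,i). cmod (f i) * (cmod (x (n - i)) * cmod (y n))) summable_on UNIV"
      using swap_summable[of "\<lambda>(i,n). cmod (f i) * (cmod (x (n - i)) * cmod (y n))"] absF
      by (simp add: case_prod_unfold)
    hence "(\<lambda>p. norm (F p)) summable_on UNIV"
      unfolding F_def by (simp add: case_prod_unfold norm_mult mult.assoc)
    thus ?thesis by (rule abs_summable_summable)
  qed
  have "ip (mult f x) y = (\<Sum>\<^sub>\<infinity>n. \<Sum>\<^sub>\<infinity>i. F (n, i))"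
    unfolding ip_def mult_def F_def by (simp add: infsum_cmult_left')
  also have "\<dots> = infsum F UNIV"
    using infsum_Sigma_banach[of F UNIV "\<lambda>_. UNIV"] sF by simp
  also have "\<dots> = infsum (\<lambda>(m,i). F (m - i, - i)) UNIV"
    by (rule infsum_reindex_bij_witness[where i="\<lambda>(n,i). (n - i, - i)" and j="\<lambda>(m,i). (m - i, - i)"])
       auto
  also have "\<dots> = (\<Sum>\<^sub>\<infinity>m. \<Sum>\<^sub>\<infinity>i. F (m - i, - i))"
  proof -
    have "(\<lambda>(m,i). F (m - i, - i)) summable_on UNIV"
      using summable_on_reindex_bij_witness[where i="\<lambda>(n,i). (n - i, - i)" and j="\<lambda>(m,i). (m - i, - i)"
          and S=UNIV and T=UNIV and g="\<lambda>(m,i). F (m - i, - i)" and h=F] sF by auto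
    thus ?thesis using infsum_Sigma_banach[of "\<lambda>(m,i). F (m - i, - i)" UNIV "\<lambda>_. UNIV"] by simp
  qed
  also have "\<dots> = ip x (mult (Jc f) y)"
  proof -
    have "cnj (\<Sum>\<^sub>\<infinity>k. cnj (f (- k)) * y (m - k)) = (\<Sum>\<^sub>\<infinity>k. f (- k) * cnj (y (m - k)))" for m
      by (subst infsum_cnj[symmetric]) simp
    hence "ip x (mult (Jc f) y) = (\<Sum>\<^sub>\<infinity>m. x m * (\<Sum>\<^sub>\<infinity>k. f (- k) * cnj (y (m - k))))"
      unfolding ip_def mult_def Jc_def by simp
    also have "\<dots> = (\<Sum>\<^sub>\<infinity>m. \<Sum>\<^sub>\<infinity>i. F (m - i, - i))"
      unfolding F_def by (simp add: infsum_cmult_right'[symmetric] mult.assoc mult.left_commute)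
    finally show ?thesis by simp
  qed
  finally show ?thesis .
qed



lemma geo_has_sum:
  fixes z :: "'a::{real_normed_field,banach}"
  assumes "norm z < 1"
  shows "((\<lambda>n::int. if n < 0 then 0 else z ^ nat n) has_sum (1 / (1 - z))) UNIV"
proof -
  have h: "((\<lambda>n::nat. z ^ n) has_sum (1 / (1 - z))) UNIV"
    by (rule norm_summable_imp_has_sum)
       (auto simp: norm_power summable_geometric geometric_sums assms)
  have b: "bij_betw int UNIV {0..}"
    by (rule bij_betwI[where g=nat]) auto
  have "((\<lambda>n::int. if n < 0 then 0 else z ^ nat n) has_sum (1 / (1 - z))) {0..}"
    using has_sum_reindex_bij_betw[OF b, of "\<lambda>n::int. if n < 0 then 0 else z ^ nat n"] h by simp
  thus ?thesis
    by (rule has_sum_cong_neutral[THEN iffD1, rotated -1]) auto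
qed

definition k0 :: "complex \<Rightarrow> seq" where
  "k0 a = (\<lambda>n. if n < 0 then 0 else (cnj a) ^ nat n)"
definition wq :: "complex \<Rightarrow> seq" where
  "wq a = (\<lambda>n. cnj (k0 a (- n - 1)))"
definition vq :: "complex \<Rightarrow> seq" where "vq a = tp (- a) 1"
definition uq :: "complex \<Rightarrow> seq" where "uq a = tp 1 (- cnj a)"
definition bs :: "complex \<Rightarrow> seq" where "bs a = mult (vq a) (k0 a)"
primrec bp :: "complex \<Rightarrow> nat \<Rightarrow> seq" where
  "bp a 0 = dlt"
| "bp a (Suc n) = mult (bs a) (bp a n)"
definition e0 :: "complex \<Rightarrow> seq" where
  "e0 a = (\<lambda>n. complex_of_real (sqrt (1 - (cmod a)\<^sup>2)) * k0 a n)"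
definition ek :: "complex \<Rightarrow> nat \<Rightarrow> seq" where
  "ek a k = mult (bp a k) (e0 a)"

definition supp0 :: "seq \<Rightarrow> bool" where "supp0 f \<longleftrightarrow> (\<forall>n<0. f n = 0)"

lemma H2_iff: "f \<in> H2 \<longleftrightarrow> f \<in> L2 \<and> supp0 f" unfolding H2_def supp0_def by auto

lemma wq_alt: "wq a n = (if n < 0 then a ^ nat (- n - 1) else 0)"
  unfolding wq_def k0_def by auto

context
  fixes a :: complex
  assumes a1: "cmod a < 1"
begin

lemma l1_k0: "l1 (k0 a)"
proof -
  have "(\<lambda>n. cmod (k0 a n)) = (\<lambda>n::int. if n < 0 then 0 else (cmod a) ^ nat n)"
    by (auto simp: k0_def norm_power)
  moreover have "(\<lambda>n::int. if n < 0 then 0 else (cmod a) ^ nat n) summable_on UNIV"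
    using geo_has_sum[of "cmod a"] a1 by (auto simp: summable_on_def)
  ultimately show ?thesis unfolding l1_def by simp
qed

lemma l1_wq: "l1 (wq a)"
proof -
  have "(\<lambda>n. cmod (k0 a (- 1 - n))) summable_on UNIV"
    using l1_k0 unfolding l1_def
    using summable_on_reindex_bij_betw[OF bij_refl, of "\<lambda>n. cmod (k0 a n)" "-1"] by simp
  moreover have "(\<lambda>n. cmod (k0 a (- 1 - n))) = (\<lambda>n. cmod (k0 a (- n - 1)))"
    by (rule ext, rule arg_cong[where f="\<lambda>m. cmod (k0 a m)"]) simp
  ultimately have "(\<lambda>n. cmod (k0 a (- n - 1))) summable_on UNIV" by simp
  thus ?thesis unfolding l1_def wq_def by simp
qed

lemma l1_bs: "l1 (bs a)" unfolding bs_def vq_def by (intro mult_l1 l1_tp l1_k0)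

lemma l1_bp: "l1 (bp a n)" by (induction n) (auto intro: mult_l1 l1_bs l1_dlt)

lemma l1_scale: "l1 f \<Longrightarrow> l1 (\<lambda>n. c * f n)"
  unfolding l1_def by (simp add: norm_mult summable_on_cmult_right)

lemma l1_e0: "l1 (e0 a)" unfolding e0_def by (intro l1_scale l1_k0)

lemma l1_ek: "l1 (ek a k)" unfolding ek_def by (intro mult_l1 l1_bp l1_e0)

lemma uk0: "mult (uq a) (k0 a) = dlt"
proof
  fix n
  show "mult (uq a) (k0 a) n = dlt n"
    unfolding uq_def mult_tp
  proof (cases "n \<le> 0")
    case True thus "1 * k0 a n + - cnj a * k0 a (n - 1) = dlt n"
      by (cases "n = 0") (auto simp: k0_def dlt_def)
  next
    case False
    hence "nat n = Suc (nat (n - 1))" by simp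
    thus "1 * k0 a n + - cnj a * k0 a (n - 1) = dlt n" using False
      by (auto simp: k0_def dlt_def)
  qed
qed

lemma vw: "mult (vq a) (wq a) = dlt"
proof
  fix n
  show "mult (vq a) (wq a) n = dlt n"
    unfolding vq_def mult_tp wq_alt
  proof (cases "n < 0")
    case True
    hence "nat (- (n - 1) - 1) = Suc (nat (- n - 1))" by simp
    thus "- a * (if n < 0 then a ^ nat (- n - 1) else 0) + 1 * (if n - 1 < 0 then a ^ nat (- (n - 1) - 1) else 0) = dlt n"
      using True by (auto simp: dlt_def)
  next
    case False
    thus "- a * (if n < 0 then a ^ nat (- n - 1) else 0) + 1 * (if n - 1 < 0 then a ^ nat (- (n - 1) - 1) else 0) = dlt n"
      by (cases "n = 0") (auto simp: dlt_def)
  qed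
qed

lemma Jbs: "Jc (bs a) = mult (uq a) (wq a)"
proof
  fix n
  have bsv: "bs a m = - a * k0 a m + k0 a (m - 1)" for m
    unfolding bs_def vq_def mult_tp by simp
  show "Jc (bs a) n = mult (uq a) (wq a) n"
    unfolding Jc_def bsv uq_def mult_tp wq_alt
  proof (cases "n < 0")
    case True
    hence "nat (- n) = Suc (nat (- n - 1))" by simp
    thus "cnj (- a * k0 a (- n) + k0 a (- n - 1)) =
        1 * (if n < 0 then a ^ nat (- n - 1) else 0) + - cnj a * (if n - 1 < 0 then a ^ nat (- (n - 1) - 1) else 0)"
      using True by (auto simp: k0_def)
  next
    case False
    thus "cnj (- a * k0 a (- n) + k0 a (- n - 1)) =
        1 * (if n < 0 then a ^ nat (- n - 1) else 0) + - cnj a * (if n - 1 < 0 then a ^ nat (- (n - 1) - 1) else 0)"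
      by (cases "n = 0") (auto simp: k0_def)
  qed
qed

lemma l1_uq: "l1 (uq a)" unfolding uq_def by (rule l1_tp)
lemma l1_vq: "l1 (vq a)" unfolding vq_def by (rule l1_tp)

end

definition bnd :: "seq \<Rightarrow> bool" where "bnd f \<longleftrightarrow> (\<exists>H. \<forall>n. cmod (f n) \<le> H)"

lemma l1_bnd: "l1 f \<Longrightarrow> bnd f" unfolding bnd_def using l1_bound by blast
lemma L2_bnd: "f \<in> L2 \<Longrightarrow> bnd f" unfolding bnd_def using L2_bound by blast

lemma massoc: "l1 f \<Longrightarrow> l1 g \<Longrightarrow> bnd h \<Longrightarrow> mult (mult f g) h = mult f (mult g h)"
  unfolding bnd_def using mult_assoc by blast

lemma assoc4: assumes "l1 f" "l1 g" "l1 h" "l1 k"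
  shows "mult (mult f g) (mult h k) = mult (mult f h) (mult g k)"
proof -
  have b: "bnd k" "bnd (mult h k)" "bnd (mult g k)" using assms by (auto intro: l1_bnd mult_l1)
  have "mult (mult f g) (mult h k) = mult f (mult g (mult h k))" by (rule massoc) (use assms b in auto)
  also have "mult g (mult h k) = mult (mult g h) k" by (rule massoc[symmetric]) (use assms b in auto)
  also have "mult g h = mult h g" by (rule mult_comm)
  also have "mult (mult h g) k = mult h (mult g k)" by (rule massoc) (use assms b in auto)
  also have "mult f (mult h (mult g k)) = mult (mult f h) (mult g k)" by (rule massoc[symmetric]) (use assms b mult_l1 in auto)
  finally show ?thesis .
qed

context
  fixes a :: complex
  assumes a1: "cmod a < 1"
begin

lemma bsJbs: "mult (bs a) (Jc (bs a)) = dlt"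
proof -
  have "mult (bs a) (Jc (bs a)) = mult (mult (vq a) (k0 a)) (mult (uq a) (wq a))"
    by (subst Jbs[OF a1]) (simp add: bs_def)
  also have "\<dots> = mult (mult (vq a) (uq a)) (mult (k0 a) (wq a))"
    by (rule assoc4) (auto intro: l1_vq l1_uq l1_k0 l1_wq a1)
  also have "mult (vq a) (uq a) = mult (uq a) (vq a)" by (rule mult_comm)
  also have "mult (mult (uq a) (vq a)) (mult (k0 a) (wq a)) = mult (mult (uq a) (k0 a)) (mult (vq a) (wq a))"
    by (rule assoc4) (auto intro: l1_vq l1_uq l1_k0 l1_wq a1)
  also have "\<dots> = dlt" by (simp add: uk0[OF a1] vw[OF a1] mult_dlt)
  finally show ?thesis .
qed

lemma Jbsbs: "mult (Jc (bs a)) (bs a) = dlt"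
  using bsJbs by (simp add: mult_comm)

lemma bs_wq: "mult (bs a) (wq a) = k0 a"
proof -
  have "mult (bs a) (wq a) = mult (mult (k0 a) (vq a)) (wq a)" by (simp add: bs_def mult_comm)
  also have "\<dots> = mult (k0 a) (mult (vq a) (wq a))"
    by (rule massoc) (auto intro: l1_bnd l1_vq l1_k0 l1_wq a1)
  also have "\<dots> = k0 a" by (simp add: vw[OF a1] mult_dlt2)
  finally show ?thesis .
qed

lemma Jbs_k0: "mult (Jc (bs a)) (k0 a) = wq a"
proof -
  have "mult (Jc (bs a)) (k0 a) = mult (mult (wq a) (uq a)) (k0 a)" by (simp add: Jbs[OF a1] mult_comm)
  also have "\<dots> = mult (wq a) (mult (uq a) (k0 a))"
    by (rule massoc) (auto intro: l1_bnd l1_uq l1_k0 l1_wq a1)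
  also have "\<dots> = wq a" by (simp add: uk0[OF a1] mult_dlt2)
  finally show ?thesis .
qed

lemma bp_add: "bp a (m + n) = mult (bp a m) (bp a n)"
proof (induction m)
  case 0 thus ?case by (simp add: mult_dlt)
next
  case (Suc m)
  have "bp a (Suc m + n) = mult (bs a) (mult (bp a m) (bp a n))" by (simp add: Suc)
  also have "\<dots> = mult (mult (bs a) (bp a m)) (bp a n)"
    by (rule massoc[symmetric]) (auto intro: l1_bnd l1_bp l1_bs a1)
  finally show ?case by simp
qed

lemma Jbp: "mult (Jc (bp a n)) (bp a n) = dlt"
proof (induction n)
  case 0 thus ?case by (simp add: Jc_dlt mult_dlt)
next
  case (Suc n)
  have "mult (Jc (bp a (Suc n))) (bp a (Suc n)) =
        mult (mult (Jc (bs a)) (Jc (bp a n))) (mult (bs a) (bp a n))"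
    by (simp add: Jc_mult)
  also have "\<dots> = mult (mult (Jc (bs a)) (bs a)) (mult (Jc (bp a n)) (bp a n))"
    by (rule assoc4) (auto intro: Jc_l1 l1_bp l1_bs a1)
  also have "\<dots> = dlt" by (simp add: Jbsbs Suc mult_dlt)
  finally show ?case .
qed

end

lemma supp0_mult: "supp0 f \<Longrightarrow> supp0 g \<Longrightarrow> supp0 (mult f g)"
  unfolding supp0_def mult_def
proof (intro allI impI)
  fix n :: int assume f: "\<forall>n<0. f n = 0" and g: "\<forall>n<0. g n = 0" and n: "n < 0"
  have "f k * g (n - k) = 0" for k
  proof (cases "k < 0")
    case True thus ?thesis using f by simp
  next
    case False hence "n - k < 0" using n by simp
    thus ?thesis using g by simp
  qed
  hence "(\<lambda>k. f k * g (n - k)) = (\<lambda>k. 0)" by (simp add: fun_eq_iff)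
  thus "(\<Sum>\<^sub>\<infinity>k. f k * g (n - k)) = 0" by simp
qed

lemma supp0_dlt: "supp0 dlt" unfolding supp0_def dlt_def by auto
lemma supp0_tp: "supp0 (tp p q)" unfolding supp0_def tp_def by auto
lemma supp0_k0: "supp0 (k0 a)" unfolding supp0_def k0_def by auto
lemma supp0_bs: "supp0 (bs a)" unfolding bs_def vq_def by (intro supp0_mult supp0_tp supp0_k0)
lemma supp0_bp: "supp0 (bp a n)" by (induction n) (auto intro: supp0_mult supp0_bs supp0_dlt)
lemma supp0_e0: "supp0 (e0 a)" unfolding supp0_def e0_def k0_def by auto
lemma supp0_ek: "supp0 (ek a k)" unfolding ek_def by (intro supp0_mult supp0_bp supp0_e0)



lemma L2_sum: "finite K \<Longrightarrow> (\<And>k. k \<in> K \<Longrightarrow> x k \<in> L2) \<Longrightarrow> (\<lambda>m. \<Sum>k\<in>K. c k * x k m) \<in> L2"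
proof (induction K rule: finite_induct)
  case empty thus ?case by (simp add: L2_zero)
next
  case (insert k K)
  thus ?case by (simp add: L2_lin)
qed

lemma ip_sum1: "finite K \<Longrightarrow> (\<And>k. k \<in> K \<Longrightarrow> x k \<in> L2) \<Longrightarrow> z \<in> L2 \<Longrightarrow>
    ip (\<lambda>m. \<Sum>k\<in>K. c k * x k m) z = (\<Sum>k\<in>K. c k * ip (x k) z)"
proof (induction K rule: finite_induct)
  case empty thus ?case by (simp add: ip_zero_left)
next
  case (insert k K)
  have "ip (\<lambda>m. \<Sum>j\<in>insert k K. c j * x j m) z = ip (\<lambda>m. c k * x k m + (\<Sum>j\<in>K. c j * x j m)) z"
    using insert by simp
  also have "\<dots> = c k * ip (x k) z + ip (\<lambda>m. \<Sum>j\<in>K. c j * x j m) z"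
    using insert by (intro ip_lin1 L2_sum) auto
  finally show ?case using insert by simp
qed

lemma ip_sum2: "finite K \<Longrightarrow> (\<And>k. k \<in> K \<Longrightarrow> x k \<in> L2) \<Longrightarrow> z \<in> L2 \<Longrightarrow>
    ip z (\<lambda>m. \<Sum>k\<in>K. c k * x k m) = (\<Sum>k\<in>K. cnj (c k) * ip z (x k))"
  using ip_sum1[of K x z c] by (subst ip_cnj) (simp add: ip_cnj[of z])

lemma ip_scale2: "ip x (\<lambda>n. c * y n) = cnj c * ip x y"
  unfolding ip_def by (simp add: infsum_cmult_right'[symmetric] mult.left_commute)

lemma ip_scale1: "ip (\<lambda>n. c * x n) y = c * ip x y"
  unfolding ip_def by (simp add: infsum_cmult_right'[symmetric] mult.assoc)

lemma iso: assumes "l1 f" "mult (Jc f) f = dlt" "x \<in> L2" "y \<in> L2"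
  shows "ip (mult f x) (mult f y) = ip x y"
proof -
  have "ip (mult f x) (mult f y) = ip x (mult (Jc f) (mult f y))"
    by (rule mult_adj) (use assms young in auto)
  also have "mult (Jc f) (mult f y) = mult (mult (Jc f) f) y"
    by (rule massoc[symmetric]) (use assms Jc_l1 L2_bnd in auto)
  finally show ?thesis by (simp add: assms mult_dlt)
qed

definition comb :: "complex \<Rightarrow> nat \<Rightarrow> (nat \<Rightarrow> complex) \<Rightarrow> seq" where
  "comb a n c = (\<lambda>m. \<Sum>k<n. c k * ek a k m)"

context
  fixes a :: complex
  assumes a1: "cmod a < 1"
begin

lemma iso_bp: "x \<in> L2 \<Longrightarrow> y \<in> L2 \<Longrightarrow> ip (mult (bp a n) x) (mult (bp a n) y) = ip x y"
  by (rule iso) (use a1 l1_bp Jbp in auto)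

lemma iso_bs: "x \<in> L2 \<Longrightarrow> y \<in> L2 \<Longrightarrow> ip (mult (bs a) x) (mult (bs a) y) = ip x y"
  by (rule iso) (use a1 l1_bs Jbsbs in auto)

lemma H2_bp: "h \<in> H2 \<Longrightarrow> mult (bp a n) h \<in> H2"
  unfolding H2_iff using a1 by (auto intro: young l1_bp supp0_mult supp0_bp)

lemma H2_bs: "h \<in> H2 \<Longrightarrow> mult (bs a) h \<in> H2"
  unfolding H2_iff using a1 by (auto intro: young l1_bs supp0_mult supp0_bs)

lemma H2_ek: "ek a k \<in> H2"
  unfolding H2_iff using a1 by (auto intro: l1_L2 l1_ek supp0_ek)

lemma L2_ek: "ek a k \<in> L2" using H2_ek unfolding H2_iff by auto
lemma L2_k0: "k0 a \<in> L2" using l1_L2 l1_k0 a1 by auto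
lemma L2_e0: "e0 a \<in> L2" using l1_L2 l1_e0 a1 by auto

lemma orth_bs: assumes "h \<in> H2" shows "ip (mult (bs a) h) (k0 a) = 0"
proof -
  have "ip (mult (bs a) h) (k0 a) = ip h (mult (Jc (bs a)) (k0 a))"
    by (rule mult_adj) (use assms a1 l1_bs L2_k0 in \<open>auto simp: H2_iff\<close>)
  also have "\<dots> = ip h (wq a)" by (simp add: Jbs_k0 a1)
  also have "\<dots> = 0" unfolding ip_def
  proof -
    have "(\<lambda>n. h n * cnj (wq a n)) = (\<lambda>n. 0)"
      using assms unfolding H2_iff supp0_def wq_alt by (auto simp: fun_eq_iff)
    thus "(\<Sum>\<^sub>\<infinity>n. h n * cnj (wq a n)) = 0" by simp
  qed
  finally show ?thesis .
qed

definition cc :: real where "cc = sqrt (1 - (cmod a)\<^sup>2)"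

lemma cc_pos: "cc > 0" unfolding cc_def using a1
  by (simp add: abs_square_less_1)

lemma e0_alt: "e0 a = (\<lambda>n. complex_of_real cc * k0 a n)" unfolding e0_def cc_def by simp

lemma ip_e0: "ip x (e0 a) = complex_of_real cc * ip x (k0 a)"
  unfolding e0_alt ip_scale2 by simp

lemma e0_norm: "ip (e0 a) (e0 a) = 1"
proof -
  define r where "r = (cmod a)\<^sup>2"
  have r: "0 \<le> r" "r < 1" unfolding r_def using a1 by (auto simp: abs_square_less_1)
  have "((\<lambda>n::int. if n < 0 then 0 else r ^ nat n) has_sum (1 / (1 - r))) UNIV"
    by (rule geo_has_sum) (use r in auto)
  hence "((\<lambda>n::int. (1 - r) * (if n < 0 then 0 else r ^ nat n)) has_sum ((1 - r) * (1 / (1 - r)))) UNIV"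
    by (rule has_sum_cmult_right)
  moreover have "(\<lambda>n::int. (1 - r) * (if n < 0 then 0 else r ^ nat n)) = (\<lambda>n. (cmod (e0 a n))\<^sup>2)"
  proof
    fix n :: int
    have "(cmod (e0 a n))\<^sup>2 = (1 - r) * (cmod (k0 a n))\<^sup>2"
      unfolding e0_def r_def using r unfolding r_def
      by (simp add: norm_mult power_mult_distrib)
    also have "(cmod (k0 a n))\<^sup>2 = (if n < 0 then 0 else r ^ nat n)"
      unfolding k0_def r_def by (simp add: norm_power power_mult[symmetric] mult.commute)
    finally show "(1 - r) * (if n < 0 then 0 else r ^ nat n) = (cmod (e0 a n))\<^sup>2" by simp
  qed
  ultimately have "nsq (e0 a) = 1" unfolding nsq_def using r by (simp add: infsumI)
  thus ?thesis using ip_self[OF L2_e0] by simp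
qed

lemma ek_0: "ek a 0 = e0 a" unfolding ek_def by (simp add: mult_dlt)

lemma ek_Suc: "ek a (Suc k) = mult (bs a) (ek a k)"
  unfolding ek_def
  by (simp, rule massoc) (use a1 l1_bs l1_bp l1_e0 l1_bnd in auto)

lemma ek_add: "ek a (m + k) = mult (bp a m) (ek a k)"
  unfolding ek_def
  by (simp add: bp_add[OF a1], rule massoc) (use a1 l1_bs l1_bp l1_e0 l1_bnd in auto)

lemma ip_bs_e0: "x \<in> H2 \<Longrightarrow> ip (mult (bs a) x) (e0 a) = 0"
  by (simp add: ip_e0 orth_bs)

lemma ek_orth_aux: "ip (ek a d) (ek a 0) = (if d = 0 then 1 else 0)"
proof (cases d)
  case 0 thus ?thesis by (simp add: ek_0 e0_norm)
next
  case (Suc d')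
  thus ?thesis by (simp add: ek_Suc ek_0 ip_bs_e0 H2_ek)
qed

lemma ek_orth: "ip (ek a k) (ek a j) = (if k = j then 1 else 0)"
proof -
  have ge: "ip (ek a k) (ek a j) = (if k = j then 1 else 0)" if "j \<le> k" for j k
  proof -
    obtain d where d: "k = j + d" using \<open>j \<le> k\<close> le_Suc_ex by blast
    have "ip (ek a k) (ek a j) = ip (mult (bp a j) (ek a d)) (mult (bp a j) (ek a 0))"
      using ek_add[of j d] ek_add[of j 0] d by simp
    also have "\<dots> = ip (ek a d) (ek a 0)" by (intro iso_bp L2_ek)
    finally show ?thesis using ek_orth_aux d by simp
  qed
  show ?thesis
  proof (cases "j \<le> k")
    case True thus ?thesis using ge by simp
  next
    case False
    hence "ip (ek a j) (ek a k) = 0" using ge[of k j] by simp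
    thus ?thesis using False by (subst ip_cnj) simp
  qed
qed

lemma ek_perp: assumes "k < n" "h \<in> H2" shows "ip (ek a k) (mult (bp a n) h) = 0"
proof -
  obtain d where d: "n = k + Suc d" using less_imp_Suc_add[OF assms(1)] by auto
  have "mult (bp a n) h = mult (bp a k) (mult (bp a (Suc d)) h)"
    unfolding d bp_add[OF a1]
    by (rule massoc) (use a1 l1_bp[of a "Suc d"] l1_bp[of a k] assms(2) L2_bnd in \<open>auto simp: H2_iff simp del: bp.simps\<close>)
  hence "ip (ek a k) (mult (bp a n) h) = ip (mult (bp a k) (ek a 0)) (mult (bp a k) (mult (bp a (Suc d)) h))"
    using ek_add[of k 0] by simp
  also have "\<dots> = ip (e0 a) (mult (bp a (Suc d)) h)"
  proof -
    have m: "mult (bp a (Suc d)) h \<in> L2" using H2_bp[OF assms(2)] H2_iff by blast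
    show ?thesis using iso_bp[OF L2_ek[of 0] m, where n=k] by (simp add: ek_0 del: bp.simps)
  qed
  also have "\<dots> = cnj (ip (mult (bs a) (mult (bp a d) h)) (e0 a))"
  proof -
    have "mult (bp a (Suc d)) h = mult (bs a) (mult (bp a d) h)"
      by (simp, rule massoc) (use a1 l1_bp l1_bs assms(2) L2_bnd mult_l1 in \<open>auto simp: H2_iff\<close>)
    thus ?thesis by (subst ip_cnj) simp
  qed
  also have "\<dots> = 0" using ip_bs_e0 H2_bp assms(2) by simp
  finally show ?thesis .
qed

lemma wq_g: assumes "g \<in> H2" "m < 0" shows "mult (wq a) g m = a ^ nat (- m - 1) * ip g (k0 a)"
proof -
  have t: "wq a k * g (m - k) = a ^ nat (- m - 1) * (g (m - k) * cnj (k0 a (m - k)))" for k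
  proof (cases "m - k < 0")
    case True thus ?thesis using assms unfolding H2_iff supp0_def by simp
  next
    case False
    hence "k < 0" "nat (- k - 1) = nat (- m - 1) + nat (m - k)" using assms(2) by auto
    thus ?thesis using False unfolding wq_alt k0_def by (simp add: power_add)
  qed
  have "mult (wq a) g m = (\<Sum>\<^sub>\<infinity>k. a ^ nat (- m - 1) * (g (m - k) * cnj (k0 a (m - k))))"
    unfolding mult_def by (simp add: t)
  also have "\<dots> = a ^ nat (- m - 1) * (\<Sum>\<^sub>\<infinity>k. g (m - k) * cnj (k0 a (m - k)))"
    by (rule infsum_cmult_right')
  also have "(\<Sum>\<^sub>\<infinity>k. g (m - k) * cnj (k0 a (m - k))) = ip g (k0 a)"
    unfolding ip_def
    by (rule infsum_reindex_bij_witness[where i="\<lambda>k. m - k" and j="\<lambda>k. m - k"]) auto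
  finally show ?thesis .
qed

lemma division: assumes "g \<in> H2" "ip g (k0 a) = 0"
  shows "mult (Jc (bs a)) g \<in> H2" "mult (bs a) (mult (Jc (bs a)) g) = g"
proof -
  have gL: "g \<in> L2" using assms(1) H2_iff by auto
  show "mult (bs a) (mult (Jc (bs a)) g) = g"
    by (subst massoc[symmetric]) (use a1 l1_bs Jc_l1 gL L2_bnd bsJbs mult_dlt in auto)
  have sup: "supp0 (mult (Jc (bs a)) g)" unfolding supp0_def
  proof (intro allI impI)
    fix m :: int assume m: "m < 0"
    have "mult (Jc (bs a)) g = mult (uq a) (mult (wq a) g)"
      unfolding Jbs[OF a1]
      by (rule massoc) (use a1 l1_uq l1_wq gL L2_bnd in auto)
    hence "mult (Jc (bs a)) g m = mult (wq a) g m - cnj a * mult (wq a) g (m - 1)"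
      unfolding uq_def by (simp add: mult_tp)
    also have "\<dots> = 0" using m by (simp add: wq_g assms)
    finally show "mult (Jc (bs a)) g m = 0" .
  qed
  show "mult (Jc (bs a)) g \<in> H2" unfolding H2_iff
    using sup young[OF Jc_l1[OF l1_bs[OF a1]] gL] by simp
qed

lemma divn: "g \<in> H2 \<Longrightarrow> (\<forall>k<n. ip g (ek a k) = 0) \<Longrightarrow> \<exists>h\<in>H2. g = mult (bp a n) h"
proof (induction n arbitrary: g)
  case 0 thus ?case by (auto simp: mult_dlt)
next
  case (Suc n)
  have "ip g (ek a 0) = 0" using Suc.prems by simp
  hence "ip g (k0 a) = 0" using ip_e0 cc_pos by (simp add: ek_0)
  note d = division[OF Suc.prems(1) this]
  define g1 where "g1 = mult (Jc (bs a)) g"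
  have g1: "g1 \<in> H2" "g = mult (bs a) g1" using d unfolding g1_def by auto
  have "\<forall>k<n. ip g1 (ek a k) = 0"
  proof (intro allI impI)
    fix k assume "k < n"
    have "ip g1 (ek a k) = ip (mult (bs a) g1) (mult (bs a) (ek a k))"
      by (rule iso_bs[symmetric]) (use g1 L2_ek in \<open>auto simp: H2_iff\<close>)
    also have "\<dots> = ip g (ek a (Suc k))" by (simp add: ek_Suc g1(2)[symmetric])
    also have "\<dots> = 0" using Suc.prems \<open>k < n\<close> by simp
    finally show "ip g1 (ek a k) = 0" .
  qed
  then obtain h where h: "h \<in> H2" "g1 = mult (bp a n) h" using Suc.IH g1(1) by blast
  have "g = mult (mult (bs a) (bp a n)) h"
    unfolding g1(2) h(2)
    by (rule massoc[symmetric]) (use a1 l1_bs l1_bp h L2_bnd in \<open>auto simp: H2_iff\<close>)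
  thus ?case using h by auto
qed

lemma L2_comb: "comb a n c \<in> L2" unfolding comb_def by (intro L2_sum L2_ek) auto

lemma H2_comb: "comb a n c \<in> H2"
  unfolding H2_iff using L2_comb unfolding supp0_def comb_def
  using supp0_ek[of a] unfolding supp0_def by simp

lemma ip_comb_ek: "ip (comb a n c) (ek a j) = (if j < n then c j else 0)"
proof -
  have "ip (comb a n c) (ek a j) = (\<Sum>k<n. c k * ip (ek a k) (ek a j))"
    unfolding comb_def by (intro ip_sum1 L2_ek) auto
  also have "\<dots> = (\<Sum>k<n. if k = j then c k else 0)" by (intro sum.cong) (auto simp: ek_orth)
  also have "\<dots> = (if j < n then c j else 0)" by (simp add: sum.delta)
  finally show ?thesis .
qed

lemma ip_comb_comb: "ip (comb a n c) (comb a n d) = (\<Sum>k<n. c k * cnj (d k))"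
proof -
  have "ip (comb a n c) (comb a n d) = (\<Sum>k<n. cnj (d k) * ip (comb a n c) (ek a k))"
    unfolding comb_def[of a n d] by (intro ip_sum2 L2_ek L2_comb) auto
  thus ?thesis by (simp add: ip_comb_ek mult.commute)
qed

lemma comb_perp: assumes "n \<le> N" "h \<in> H2" shows "ip (comb a n c) (mult (bp a N) h) = 0"
proof -
  have "ip (comb a n c) (mult (bp a N) h) = (\<Sum>k<n. c k * ip (ek a k) (mult (bp a N) h))"
    unfolding comb_def by (intro ip_sum1 L2_ek) (use H2_bp assms(2) in \<open>auto simp: H2_iff\<close>)
  also have "\<dots> = 0" using assms by (simp add: ek_perp)
  finally show ?thesis .
qed

lemma comb_K2: "n \<le> N \<Longrightarrow> comb a n c \<in> K2 (bp a N)"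
  unfolding K2_def using H2_comb comb_perp by auto

lemma K2_repr: assumes "f \<in> K2 (bp a n)" shows "f = comb a n (\<lambda>k. ip f (ek a k))"
proof -
  define c where "c = (\<lambda>k. ip f (ek a k))"
  define g where "g = (\<lambda>m. f m - comb a n c m)"
  have fH: "f \<in> H2" and fp: "\<And>h. h \<in> H2 \<Longrightarrow> ip f (mult (bp a n) h) = 0"
    using assms unfolding K2_def by auto
  have fL: "f \<in> L2" using fH H2_iff by auto
  have gL: "g \<in> L2" unfolding g_def by (intro L2_diff fL L2_comb)
  have gH: "g \<in> H2" unfolding H2_iff using gL fH H2_comb unfolding H2_iff supp0_def g_def by auto
  have ipg: "ip g z = ip f z - ip (comb a n c) z" if "z \<in> L2" for z
    unfolding g_def using ip_lin1[of "comb a n c" f z "-1"] L2_comb fL that by simp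
  have "\<forall>k<n. ip g (ek a k) = 0"
    by (auto simp: ipg L2_ek ip_comb_ek c_def)
  then obtain h where h: "h \<in> H2" "g = mult (bp a n) h" using divn gH by blast
  have "ip g g = 0"
  proof -
    have "ip g g = ip f (mult (bp a n) h) - ip (comb a n c) (mult (bp a n) h)"
      using h ipg gL by simp
    also have "\<dots> = 0" using fp h(1) comb_perp[of n n h c] by simp
    finally show ?thesis .
  qed
  hence "g = (\<lambda>m. 0)" by (rule ip_zero[OF gL])
  thus ?thesis unfolding g_def c_def by (auto simp: fun_eq_iff)
qed

end



lemma cis_deriv: assumes "k \<noteq> 0"
  shows "((\<lambda>t. cis (of_int k * t) / (\<i> * of_int k)) has_vector_derivative cis (of_int k * t)) (at t within S)"
  unfolding has_vector_derivative_def
  apply (rule has_derivative_eq_rhs)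
   apply (rule derivative_eq_intros | simp)+
  using assms by (auto simp: fun_eq_iff scaleR_conv_of_real field_simps)

lemma cis_int: "((\<lambda>t. cis (of_int k * t)) has_integral (if k = 0 then 2*pi else 0)) {0..2*pi}"
proof (cases "k = 0")
  case True thus ?thesis using has_integral_const_real[of "1::complex" 0 "2*pi"]
    by (simp add: scaleR_conv_of_real)
next
  case False
  have "((\<lambda>t. cis (of_int k * t)) has_integral
      (cis (of_int k * (2*pi)) / (\<i> * of_int k) - cis (of_int k * 0) / (\<i> * of_int k))) {0..2*pi}"
    by (rule fundamental_theorem_of_calculus) (use cis_deriv[OF False] in auto)
  moreover have "cis (of_int k * (2*pi)) = 1"
    by (simp add: cis_conv_exp exp_eq_1 mult.commute)
  ultimately show ?thesis using False by simp
qed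

lemma fourier_series:
  fixes F :: "complex \<Rightarrow> complex" and c :: seq
  assumes c: "l1 c"
    and hs: "\<And>t. ((\<lambda>m. c m * cis (of_int m * t)) has_sum F (cis t)) UNIV"
    and cont: "continuous_on {0..2*pi} (\<lambda>t. F (cis t))"
  shows "fourier_coeff F n = c n"
proof -
  define G where "G t = F (cis t) * cis (- (of_int n * t))" for t
  have Gi: "(G has_integral (integral {0..2*pi} G)) {0..2*pi}"
    unfolding G_def
    by (intro integrable_integral integrable_continuous_real continuous_intros cont)
  define I where "I = integral {0..2*pi} G"
  have cabs: "(\<lambda>m. cmod (c m)) summable_on UNIV" using c unfolding l1_def .
  have main: "cmod (I - complex_of_real (2 * pi) * c n) \<le> 2 * pi * e" if e: "e > 0" for e
  proof -
    obtain S0 where S0: "finite S0" "dist (sum (\<lambda>m. cmod (c m)) S0) (n1 c) \<le> e"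
      using infsum_finite_approximation[OF cabs e] unfolding n1_def by auto
    define S where "S = insert n S0"
    have S: "finite S" "n \<in> S" unfolding S_def using S0 by auto
    have tail: "(\<Sum>\<^sub>\<infinity>m\<in>UNIV - S. cmod (c m)) \<le> e"
    proof -
      have "n1 c = sum (\<lambda>m. cmod (c m)) S + (\<Sum>\<^sub>\<infinity>m\<in>UNIV - S. cmod (c m))"
      proof -
        have "n1 c = (\<Sum>\<^sub>\<infinity>m\<in>S \<union> (UNIV - S). cmod (c m))" unfolding n1_def by simp
        also have "\<dots> = (\<Sum>\<^sub>\<infinity>m\<in>S. cmod (c m)) + (\<Sum>\<^sub>\<infinity>m\<in>UNIV - S. cmod (c m))"
          by (intro infsum_Un_disjoint summable_on_subset_banach[OF cabs]) (use S in auto)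
        finally show ?thesis using S by simp
      qed
      moreover have "sum (\<lambda>m. cmod (c m)) S0 \<le> sum (\<lambda>m. cmod (c m)) S"
        unfolding S_def by (rule sum_mono2) (use S0 in auto)
      moreover have "sum (\<lambda>m. cmod (c m)) S \<le> n1 c"
        unfolding n1_def by (rule finite_sum_le_infsum[OF cabs]) (use S in auto)
      ultimately show ?thesis using S0(2) unfolding dist_real_def by linarith
    qed
    define P where "P t = (\<Sum>m\<in>S. c m * cis (of_int (m - n) * t))" for t
    have Pi: "(P has_integral (complex_of_real (2 * pi) * c n)) {0..2*pi}"
    proof -
      have "(P has_integral (\<Sum>m\<in>S. c m * (if m - n = 0 then 2*pi else 0))) {0..2*pi}"
        unfolding P_def by (intro has_integral_sum S has_integral_mult_right cis_int)
      moreover have "(\<Sum>m\<in>S. c m * complex_of_real (if m - n = 0 then 2*pi else 0)) = complex_of_real (2 * pi) * c n"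
      proof -
        have "(\<Sum>m\<in>S. c m * complex_of_real (if m - n = 0 then 2*pi else 0)) =
              (\<Sum>m\<in>S. if m = n then c m * complex_of_real (2*pi) else 0)"
          by (intro sum.cong) auto
        also have "\<dots> = c n * complex_of_real (2*pi)" using S by (simp add: sum.delta')
        finally show ?thesis by (simp add: mult.commute)
      qed
      ultimately show ?thesis by simp
    qed
    have bnd: "cmod (G t - P t) \<le> e" for t
    proof -
      let ?z = "cis t"
      have sm: "(\<lambda>m. c m * cis (of_int m * t)) summable_on UNIV" using hs[of t] by (auto simp: summable_on_def)
      have "F ?z = (\<Sum>\<^sub>\<infinity>m. c m * cis (of_int m * t))" using hs[of t] by (simp add: infsumI)
      also have "\<dots> = (\<Sum>\<^sub>\<infinity>m\<in>S \<union> (UNIV - S). c m * cis (of_int m * t))" by simp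
      also have "\<dots> = (\<Sum>m\<in>S. c m * cis (of_int m * t)) + (\<Sum>\<^sub>\<infinity>m\<in>UNIV - S. c m * cis (of_int m * t))"
        by (subst infsum_Un_disjoint) (use S summable_on_subset_banach[OF sm] in auto)
      finally have Fz: "F ?z - (\<Sum>m\<in>S. c m * cis (of_int m * t)) = (\<Sum>\<^sub>\<infinity>m\<in>UNIV - S. c m * cis (of_int m * t))"
        by simp
      have tw: "c m * cis (of_int (m - n) * t) = c m * cis (of_int m * t) * cis (- (of_int n * t))" for m
        by (simp add: cis_mult algebra_simps)
      have "G t - P t = (F ?z - (\<Sum>m\<in>S. c m * cis (of_int m * t))) * cis (- (of_int n * t))"
        unfolding G_def P_def tw by (simp add: left_diff_distrib sum_distrib_right)
      hence "cmod (G t - P t) = cmod (\<Sum>\<^sub>\<infinity>m\<in>UNIV - S. c m * cis (of_int m * t))"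
        by (simp add: Fz norm_mult)
      also have "\<dots> \<le> (\<Sum>\<^sub>\<infinity>m\<in>UNIV - S. cmod (c m * cis (of_int m * t)))"
        by (rule norm_infsum_bound) (use summable_on_subset_banach[OF cabs] in \<open>simp add: norm_mult\<close>)
      also have "\<dots> = (\<Sum>\<^sub>\<infinity>m\<in>UNIV - S. cmod (c m))" by (simp add: norm_mult)
      also have "\<dots> \<le> e" by (rule tail)
      finally show ?thesis .
    qed
    have "((\<lambda>t. G t - P t) has_integral (I - complex_of_real (2 * pi) * c n)) {0..2*pi}"
      unfolding I_def by (intro has_integral_diff Gi Pi)
    hence hi: "((\<lambda>t. G t - P t) has_integral (I - complex_of_real (2 * pi) * c n)) (cbox 0 (2*pi))"
      by (simp add: cbox_interval)
    have "cmod (I - complex_of_real (2 * pi) * c n) \<le> e * (2 * pi)"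
      using has_integral_bound[OF _ hi, of e] e bnd by (simp add: cbox_interval)
    thus ?thesis by (simp add: mult.commute)
  qed
  have "cmod (I - complex_of_real (2 * pi) * c n) = 0"
  proof (rule ccontr)
    assume h: "cmod (I - complex_of_real (2 * pi) * c n) \<noteq> 0"
    define e where "e = cmod (I - complex_of_real (2 * pi) * c n) / (4 * pi)"
    have "e > 0" unfolding e_def using h by (simp add: pi_gt_zero)
    from main[OF this] show False unfolding e_def using h pi_gt_zero
      by (simp add: field_simps)
  qed
  hence "I = complex_of_real (2 * pi) * c n" by simp
  thus ?thesis unfolding fourier_coeff_def I_def G_def by simp
qed

lemma has_sum_conv:
  assumes f: "l1 f" and g: "l1 g"
    and A: "((\<lambda>m. f m * cis (of_int m * t)) has_sum A) UNIV"
    and B: "((\<lambda>m. g m * cis (of_int m * t)) has_sum B) UNIV"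
  shows "((\<lambda>m. mult f g m * cis (of_int m * t)) has_sum (A * B)) UNIV"
proof -
  define P where "P = (\<lambda>(i,j). f i * cis (of_int i * t) * (g j * cis (of_int j * t)))"
  have Pabs: "(\<lambda>p. norm (P p)) summable_on UNIV"
    using prod_abs_summable[OF f g] unfolding P_def by (simp add: case_prod_unfold norm_mult)
  have Ps: "P summable_on UNIV" by (rule abs_summable_summable[OF Pabs])
  define Q where "Q = (\<lambda>(n,i). f i * g (n - i) * cis (of_int n * t))"
  have PQ: "Q = (\<lambda>p. P ((\<lambda>(n,i). (i, n - i)) p))"
    unfolding P_def Q_def by (auto simp: fun_eq_iff cis_mult algebra_simps)
  have Qs: "Q summable_on UNIV" unfolding PQ using summable_on_reindex_bij_betw[OF bij_pair, of P] Ps by simp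
  have QP: "infsum Q UNIV = infsum P UNIV" unfolding PQ by (rule infsum_reindex_bij_betw[OF bij_pair])
  have "A * B = (\<Sum>\<^sub>\<infinity>i. f i * cis (of_int i * t)) * (\<Sum>\<^sub>\<infinity>j. g j * cis (of_int j * t))"
    using A B by (simp add: infsumI)
  also have "\<dots> = (\<Sum>\<^sub>\<infinity>i. f i * cis (of_int i * t) * (\<Sum>\<^sub>\<infinity>j. g j * cis (of_int j * t)))"
    by (rule infsum_cmult_left'[symmetric])
  also have "\<dots> = (\<Sum>\<^sub>\<infinity>i. \<Sum>\<^sub>\<infinity>j. P (i, j))"
    by (intro infsum_cong) (simp add: P_def infsum_cmult_right')
  also have "\<dots> = infsum P UNIV" using infsum_Sigma_banach[of P UNIV "\<lambda>_. UNIV"] Ps by simp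
  also have "\<dots> = infsum Q UNIV" by (rule QP[symmetric])
  also have "\<dots> = (\<Sum>\<^sub>\<infinity>n. \<Sum>\<^sub>\<infinity>i. Q (n, i))" using infsum_Sigma_banach[of Q UNIV "\<lambda>_. UNIV"] Qs by simp
  also have "\<dots> = (\<Sum>\<^sub>\<infinity>n. mult f g n * cis (of_int n * t))"
    unfolding Q_def mult_def by (simp add: infsum_cmult_left')
  finally have eq: "A * B = (\<Sum>\<^sub>\<infinity>n. mult f g n * cis (of_int n * t))" .
  have "(\<lambda>n. norm (mult f g n * cis (of_int n * t))) summable_on UNIV"
    using mult_l1[OF f g] unfolding l1_def by (simp add: norm_mult)
  hence "(\<lambda>n. mult f g n * cis (of_int n * t)) summable_on UNIV"
    by (rule abs_summable_summable)
  thus ?thesis using eq by (simp add: has_sum_infsum)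
qed

context
  fixes a :: complex
  assumes a1: "cmod a < 1"
begin

lemma k0_has_sum: "((\<lambda>m. k0 a m * cis (of_int m * t)) has_sum (1 / (1 - cnj a * cis t))) UNIV"
proof -
  have "norm (cnj a * cis t) < 1" using a1 by (simp add: norm_mult)
  from geo_has_sum[OF this]
  show ?thesis
  proof (rule has_sum_cong[THEN iffD1, rotated])
    fix m :: int
    show "(if m < 0 then 0 else (cnj a * cis t) ^ nat m) = k0 a m * cis (of_int m * t)"
    proof (cases "m < 0")
      case True thus ?thesis by (simp add: k0_def)
    next
      case False
      have "cis t ^ nat m = cis (real (nat m) * t)" by (rule Complex.DeMoivre)
      also have "real (nat m) = of_int m" using False by simp
      finally show ?thesis using False by (simp add: k0_def power_mult_distrib)
    qed
  qed
qed

lemma tp_has_sum: "((\<lambda>m. tp p q m * cis (of_int m * t)) has_sum (p + q * cis t)) UNIV"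
proof -
  have "((\<lambda>m. tp p q m * cis (of_int m * t)) has_sum (\<Sum>m\<in>{0,1}. tp p q m * cis (of_int m * t))) {0,1}"
    by (rule has_sum_finite) simp
  hence "((\<lambda>m. tp p q m * cis (of_int m * t)) has_sum (p + q * cis t)) {0,1}" by (simp add: tp_def)
  thus ?thesis by (rule has_sum_cong_neutral[THEN iffD1, rotated -1]) (auto simp: tp_def)
qed

lemma den_ne: "1 - cnj a * cis t \<noteq> 0"
proof
  assume "1 - cnj a * cis t = 0"
  hence "cmod (cnj a * cis t) = 1" by (metis eq_iff_diff_eq_0 norm_one)
  thus False using a1 by (simp add: norm_mult)
qed

lemma bp_has_sum: "((\<lambda>m. bp a n m * cis (of_int m * t)) has_sum (blaschke a (cis t) ^ n)) UNIV"
proof (induction n)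
  case 0
  have "((\<lambda>m. tp 1 0 m * cis (of_int m * t)) has_sum 1) UNIV" using tp_has_sum[of 1 0 t] by simp
  moreover have "tp 1 0 = dlt" by (auto simp: tp_def dlt_def)
  ultimately show ?case by simp
next
  case (Suc n)
  have bs: "((\<lambda>m. bs a m * cis (of_int m * t)) has_sum ((- a + 1 * cis t) * (1 / (1 - cnj a * cis t)))) UNIV"
    unfolding bs_def vq_def by (intro has_sum_conv l1_tp l1_k0 a1 tp_has_sum k0_has_sum)
  have "blaschke a (cis t) = (- a + 1 * cis t) * (1 / (1 - cnj a * cis t))"
    unfolding blaschke_def by simp
  hence bs': "((\<lambda>m. bs a m * cis (of_int m * t)) has_sum (blaschke a (cis t))) UNIV" using bs by simp
  show ?case by (simp, rule has_sum_conv[OF l1_bs[OF a1] l1_bp[OF a1] bs' Suc])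
qed

lemma bpow_bp: "bpow a n = bp a n"
proof
  fix m
  show "bpow a n m = bp a n m"
    unfolding bpow_def
  proof (rule fourier_series[OF l1_bp[OF a1] bp_has_sum])
    show "continuous_on {0..2 * pi} (\<lambda>t. blaschke a (cis t) ^ n)"
      unfolding blaschke_def by (intro continuous_intros) (use den_ne in auto)
  qed
qed

end



definition Rf :: "seq \<Rightarrow> seq" where "Rf f = (\<lambda>m. cnj (f (- m - 1)))"

lemma conjC_Rf: "conjC \<theta> f = mult \<theta> (Rf f)" unfolding conjC_def Rf_def by simp

lemma Rf_mult: "Rf (mult f g) = mult (Jc f) (Rf g)"
proof
  fix m
  have "Rf (mult f g) m = (\<Sum>\<^sub>\<infinity>k. cnj (f k) * cnj (g (- m - 1 - k)))"
    unfolding Rf_def mult_def by (subst infsum_cnj[symmetric]) simp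
  also have "\<dots> = (\<Sum>\<^sub>\<infinity>k. cnj (f (- k)) * cnj (g (- m - 1 - (- k))))"
    by (rule infsum_reindex_bij_witness[where i="\<lambda>k. - k" and j="\<lambda>k. - k"]) auto
  also have "\<dots> = mult (Jc f) (Rf g) m" unfolding Jc_def mult_def Rf_def
    by (intro infsum_cong) (simp add: algebra_simps)
  finally show "Rf (mult f g) m = mult (Jc f) (Rf g) m" .
qed

lemma l1_Rf: assumes "l1 f" shows "l1 (Rf f)"
proof -
  have "(\<lambda>n. cmod (f (- 1 - n))) summable_on UNIV"
    using assms unfolding l1_def
    using summable_on_reindex_bij_betw[OF bij_refl, of "\<lambda>n. cmod (f n)" "-1"] by simp
  moreover have "(\<lambda>n. cmod (f (- 1 - n))) = (\<lambda>n. cmod (f (- n - 1)))"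
    by (rule ext, rule arg_cong[where f="\<lambda>m. cmod (f m)"]) simp
  ultimately show ?thesis unfolding l1_def Rf_def by simp
qed

lemma mult_scale2: "mult f (\<lambda>m. c * x m) = (\<lambda>m. c * mult f x m)"
  unfolding mult_def by (simp add: infsum_cmult_right'[symmetric] mult.left_commute)

lemma mult_sum2: "finite K \<Longrightarrow> f \<in> L2 \<Longrightarrow> (\<And>k. k \<in> K \<Longrightarrow> x k \<in> L2) \<Longrightarrow>
   mult f (\<lambda>m. \<Sum>k\<in>K. c k * x k m) = (\<lambda>m. \<Sum>k\<in>K. c k * mult f (x k) m)"
proof (induction K rule: finite_induct)
  case empty thus ?case by (simp add: mult_zero2)
next
  case (insert k K)
  have "mult f (\<lambda>m. \<Sum>j\<in>insert k K. c j * x j m) = mult f (\<lambda>m. c k * x k m + (\<Sum>j\<in>K. c j * x j m))"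
    using insert by simp
  also have "\<dots> = (\<lambda>m. c k * mult f (x k) m + mult f (\<lambda>m. \<Sum>j\<in>K. c j * x j m) m)"
    using insert by (intro mult_lin2 L2_sum) auto
  finally show ?case using insert by simp
qed

lemma l1_lin: assumes "l1 f" "l1 g" shows "l1 (\<lambda>n. c * f n + g n)"
proof -
  have "(\<lambda>n. cmod c * cmod (f n) + cmod (g n)) summable_on UNIV"
    using assms unfolding l1_def by (intro summable_on_add summable_on_cmult_right)
  thus ?thesis unfolding l1_def
    by (rule summable_on_comparison_test)
       (auto simp: norm_mult[symmetric] intro: norm_triangle_ineq[THEN order_trans])
qed

lemma l1_zero: "l1 (\<lambda>n. 0)" unfolding l1_def by simp

lemma l1_sum: "finite K \<Longrightarrow> (\<And>k. k \<in> K \<Longrightarrow> l1 (x k)) \<Longrightarrow> l1 (\<lambda>m. \<Sum>k\<in>K. c k * x k m)"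
proof (induction K rule: finite_induct)
  case empty thus ?case by (simp add: l1_zero)
next
  case (insert k K) thus ?case by (simp add: l1_lin)
qed

lemma ip_diff: "x \<in> L2 \<Longrightarrow> y \<in> L2 \<Longrightarrow> z \<in> L2 \<Longrightarrow> ip (\<lambda>m. x m - y m) z = ip x z - ip y z"
  using ip_lin1[of y x z "-1"] by simp

lemma comb_cong: "(\<And>k. k < n \<Longrightarrow> c k = d k) \<Longrightarrow> comb a n c = comb a n d"
  unfolding comb_def by (intro ext sum.cong) auto

lemma comb_lin: "(\<lambda>m. x * comb a n c m + comb a n d m) = comb a n (\<lambda>k. x * c k + d k)"
  unfolding comb_def by (simp add: sum_distrib_left sum.distrib algebra_simps)

lemma comb_zero: "comb a n (\<lambda>k. 0) = (\<lambda>m. 0)" unfolding comb_def by simp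

lemma comb_0: "comb a 0 c = (\<lambda>m. 0)" unfolding comb_def by simp

lemma comb_Suc: "comb a (Suc n) c = (\<lambda>m. c n * ek a n m + comb a n c m)"
  unfolding comb_def by (simp add: add.commute)

lemma comb_delta: assumes "k < n" shows "comb a n (\<lambda>i. if i = k then 1 else 0) = ek a k"
proof
  fix m
  have "(\<Sum>i<n. (if i = k then 1 else 0) * ek a i m) = (\<Sum>i<n. if i = k then ek a i m else 0)"
    by (intro sum.cong) auto
  thus "comb a n (\<lambda>i. if i = k then 1 else 0) m = ek a k m" unfolding comb_def using assms by simp
qed

context
  fixes a :: complex
  assumes a1: "cmod a < 1"
begin

lemma ek_S: assumes "k < n" shows "ek a k \<in> K2 (bp a n)"
proof -
  have "comb a n (\<lambda>i. if i = k then 1 else 0) \<in> K2 (bp a n)" by (rule comb_K2[OF a1]) simp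
  thus ?thesis using comb_delta[OF assms] by simp
qed

lemma comb_inj: assumes "comb a n c = comb a n d" "k < n" shows "c k = d k"
  using ip_comb_ek[OF a1, of n c k] ip_comb_ek[OF a1, of n d k] assms by simp

lemma comb_eq_iff: "comb a n c = comb a n d \<longleftrightarrow> (\<forall>k<n. c k = d k)"
  using comb_inj comb_cong by blast

lemma K2_iff: "f \<in> K2 (bp a n) \<longleftrightarrow> (\<exists>c. f = comb a n c)"
  using K2_repr[OF a1] comb_K2[OF a1] by blast

lemma proj_S: assumes "x \<in> L2"
  shows "proj (K2 (bp a n)) x = comb a n (\<lambda>k. ip x (ek a k))"
proof -
  let ?S = "K2 (bp a n)"
  define g0 where "g0 = comb a n (\<lambda>k. ip x (ek a k))"
  have perp: "ip (\<lambda>m. x m - g m) h = 0"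
    if g: "g \<in> ?S" and gc: "\<And>k. k < n \<Longrightarrow> ip g (ek a k) = ip x (ek a k)" and h: "h \<in> ?S" for g h
  proof -
    obtain d where d: "h = comb a n d" using h K2_iff by blast
    have gL: "g \<in> L2" using g unfolding K2_def H2_iff by auto
    have "ip (\<lambda>m. x m - g m) h = (\<Sum>k<n. cnj (d k) * ip (\<lambda>m. x m - g m) (ek a k))"
      unfolding d comb_def by (intro ip_sum2 L2_ek[OF a1] L2_diff assms gL) auto
    also have "\<dots> = 0" by (intro sum.neutral) (simp add: ip_diff assms gL L2_ek[OF a1] gc)
    finally show ?thesis .
  qed
  have ex: "\<exists>g. g \<in> ?S \<and> (\<forall>h\<in>?S. ip (\<lambda>m. x m - g m) h = 0)"
  proof (intro exI conjI ballI)
    show "g0 \<in> ?S" unfolding g0_def by (rule comb_K2[OF a1]) simp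
    show "ip (\<lambda>m. x m - g0 m) h = 0" if "h \<in> ?S" for h
      by (rule perp[OF \<open>g0 \<in> ?S\<close> _ that]) (simp add: g0_def ip_comb_ek[OF a1])
  qed
  define g where "g = proj ?S x"
  have g: "g \<in> ?S" "\<forall>h\<in>?S. ip (\<lambda>m. x m - g m) h = 0"
    using someI_ex[OF ex] unfolding g_def proj_def by auto
  have gL: "g \<in> L2" using g unfolding K2_def H2_iff by auto
  have "ip g (ek a k) = ip x (ek a k)" if "k < n" for k
  proof -
    have "ek a k \<in> ?S" by (rule ek_S[OF that])
    hence "ip (\<lambda>m. x m - g m) (ek a k) = 0" using g by auto
    thus ?thesis by (simp add: ip_diff assms gL L2_ek[OF a1])
  qed
  hence "g = comb a n (\<lambda>k. ip x (ek a k))"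
  proof -
    assume co: "\<And>k. k < n \<Longrightarrow> ip g (ek a k) = ip x (ek a k)"
    have "g = comb a n (\<lambda>k. ip g (ek a k))" by (rule K2_repr[OF a1 g(1)])
    also have "\<dots> = comb a n (\<lambda>k. ip x (ek a k))" by (rule comb_cong) (rule co)
    finally show ?thesis .
  qed
  thus ?thesis unfolding g_def .
qed

lemma adj_S:
  assumes T: "\<And>c. T (comb a n c) = comb a n (\<lambda>j. \<Sum>k<n. Mx j k * c k)"
    and f: "f = comb a n fd"
  shows "adjoint_on (K2 (bp a n)) T f = comb a n (\<lambda>k. \<Sum>j<n. cnj (Mx j k) * fd j)"
proof -
  let ?S = "K2 (bp a n)"
  define h0 where "h0 = comb a n (\<lambda>k. \<Sum>j<n. cnj (Mx j k) * fd j)"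
  have ex: "\<exists>h. h \<in> ?S \<and> (\<forall>g\<in>?S. ip (T g) f = ip g h)"
  proof (intro exI conjI ballI)
    show "h0 \<in> ?S" unfolding h0_def by (rule comb_K2[OF a1]) simp
    fix g assume "g \<in> ?S"
    then obtain c where c: "g = comb a n c" using K2_iff by blast
    have "ip (T g) f = (\<Sum>j<n. (\<Sum>k<n. Mx j k * c k) * cnj (fd j))"
      unfolding c T f by (rule ip_comb_comb[OF a1])
    also have "\<dots> = (\<Sum>j<n. \<Sum>k<n. Mx j k * c k * cnj (fd j))"
      by (simp add: sum_distrib_right)
    also have "\<dots> = (\<Sum>k<n. \<Sum>j<n. Mx j k * c k * cnj (fd j))"
      by (rule sum.swap)
    also have "\<dots> = (\<Sum>k<n. c k * (\<Sum>j<n. Mx j k * cnj (fd j)))"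
      by (simp add: sum_distrib_left mult_ac)
    also have "\<dots> = (\<Sum>k<n. c k * cnj (\<Sum>j<n. cnj (Mx j k) * fd j))"
      by simp
    also have "\<dots> = ip g h0" unfolding c h0_def by (rule ip_comb_comb[OF a1, symmetric])
    finally show "ip (T g) f = ip g h0" .
  qed
  define h where "h = adjoint_on ?S T f"
  have h: "h \<in> ?S" "\<forall>g\<in>?S. ip (T g) f = ip g h"
    using someI_ex[OF ex] unfolding h_def adjoint_on_def by auto
  have hL: "h \<in> L2" using h unfolding K2_def H2_iff by auto
  have "ip h (ek a k) = (\<Sum>j<n. cnj (Mx j k) * fd j)" if "k < n" for k
  proof -
    have ekS: "ek a k \<in> ?S" by (rule ek_S[OF that])
    have Tek: "T (ek a k) = comb a n (\<lambda>j. Mx j k)"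
      using T[of "\<lambda>i. if i = k then 1 else 0"] comb_delta[OF that, of a] that
      by (simp add: if_distrib cong: if_cong)
    have "ip (ek a k) h = ip (T (ek a k)) f" using h ekS by auto
    also have "\<dots> = (\<Sum>j<n. Mx j k * cnj (fd j))" unfolding Tek f by (rule ip_comb_comb[OF a1])
    finally have "ip (ek a k) h = (\<Sum>j<n. Mx j k * cnj (fd j))" .
    hence "ip h (ek a k) = cnj (\<Sum>j<n. Mx j k * cnj (fd j))" by (subst ip_cnj) simp
    thus ?thesis by simp
  qed
  hence "h = h0"
  proof -
    assume co: "\<And>k. k < n \<Longrightarrow> ip h (ek a k) = (\<Sum>j<n. cnj (Mx j k) * fd j)"
    have "h = comb a n (\<lambda>k. ip h (ek a k))" by (rule K2_repr[OF a1 h(1)])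
    also have "\<dots> = h0" unfolding h0_def by (rule comb_cong) (rule co)
    finally show ?thesis .
  qed
  thus ?thesis unfolding h_def h0_def .
qed

lemma Rf_e0: "Rf (e0 a) = (\<lambda>m. complex_of_real (cc a) * wq a m)"
  unfolding Rf_def e0_alt[OF a1] wq_def by simp

lemma conjC_ek: assumes "k < n" shows "conjC (bp a n) (ek a k) = ek a (n - Suc k)"
proof -
  define d where "d = n - Suc k"
  have n: "n = d + Suc k" unfolding d_def using assms by simp
  have l1R: "l1 (Rf (e0 a))" by (intro l1_Rf l1_e0 a1)
  have "conjC (bp a n) (ek a k) = mult (bp a n) (mult (Jc (bp a k)) (Rf (e0 a)))"
    unfolding conjC_Rf ek_def Rf_mult ..
  also have "\<dots> = mult (mult (bp a n) (Jc (bp a k))) (Rf (e0 a))"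
    by (rule massoc[symmetric]) (use a1 l1_bp Jc_l1 l1R l1_bnd in auto)
  also have "mult (bp a n) (Jc (bp a k)) = mult (bp a d) (bs a)"
  proof -
    have "bp a n = mult (mult (bp a d) (bs a)) (bp a k)"
      unfolding n bp_add[OF a1]
      by (simp, rule massoc[symmetric]) (use a1 l1_bp l1_bs l1_bnd in auto)
    hence "mult (bp a n) (Jc (bp a k)) = mult (mult (mult (bp a d) (bs a)) (bp a k)) (Jc (bp a k))"
      by simp
    also have "\<dots> = mult (mult (bp a d) (bs a)) (mult (bp a k) (Jc (bp a k)))"
      by (rule massoc) (use a1 l1_bp l1_bs Jc_l1 l1_bnd mult_l1 in auto)
    also have "mult (bp a k) (Jc (bp a k)) = dlt" using Jbp[OF a1, of k] by (simp add: mult_comm)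
    finally show ?thesis by (simp add: mult_dlt2)
  qed
  also have "mult (mult (bp a d) (bs a)) (Rf (e0 a)) = mult (bp a d) (mult (bs a) (Rf (e0 a)))"
    by (rule massoc) (use a1 l1_bp l1_bs l1R l1_bnd in auto)
  also have "mult (bs a) (Rf (e0 a)) = e0 a"
    by (simp only: Rf_e0 mult_scale2 bs_wq[OF a1]) (simp add: e0_alt[OF a1])
  finally show ?thesis unfolding ek_def d_def .
qed

lemma conjC_comb: "conjC (bp a n) (comb a n c) = comb a n (\<lambda>k. cnj (c (n - Suc k)))"
proof -
  have R: "Rf (comb a n c) = (\<lambda>m. \<Sum>k<n. cnj (c k) * Rf (ek a k) m)"
    unfolding Rf_def comb_def by simp
  have "conjC (bp a n) (comb a n c) = (\<lambda>m. \<Sum>k<n. cnj (c k) * mult (bp a n) (Rf (ek a k)) m)"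
    unfolding conjC_Rf R
    by (intro mult_sum2 l1_L2 l1_bp a1 l1_Rf l1_ek) auto
  also have "\<dots> = (\<lambda>m. \<Sum>k<n. cnj (c k) * ek a (n - Suc k) m)"
    using conjC_ek by (simp add: conjC_Rf)
  also have "\<dots> = comb a n (\<lambda>k. cnj (c (n - Suc k)))"
  proof
    fix m
    have "(\<Sum>k<n. cnj (c k) * ek a (n - Suc k) m) =
          (\<Sum>k<n. cnj (c (n - Suc (n - Suc k))) * ek a (n - Suc k) m)"
      by (intro sum.cong) auto
    also have "\<dots> = (\<Sum>k<n. cnj (c (n - Suc k)) * ek a k m)"
      by (rule sum.nat_diff_reindex[where g="\<lambda>k. cnj (c (n - Suc k)) * ek a k m"])
    finally show "(\<Sum>k<n. cnj (c k) * ek a (n - Suc k) m) = comb a n (\<lambda>k. cnj (c (n - Suc k))) m"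
      unfolding comb_def .
  qed
  finally show ?thesis .
qed

lemma nsq_comb: "nsq (comb a n c) = (\<Sum>k<n. (cmod (c k))\<^sup>2)"
proof -
  have "complex_of_real (nsq (comb a n c)) = ip (comb a n c) (comb a n c)"
    by (rule ip_self[OF L2_comb[OF a1], symmetric])
  also have "\<dots> = (\<Sum>k<n. c k * cnj (c k))" by (rule ip_comb_comb[OF a1])
  also have "\<dots> = complex_of_real (\<Sum>k<n. (cmod (c k))\<^sup>2)"
    by (simp only: of_real_sum complex_norm_square)
  finally show ?thesis using of_real_eq_iff by blast
qed

end



lemma Toep_shift:
  assumes T: "\<forall>j k. Suc j < N \<longrightarrow> Suc k < N \<longrightarrow> M (Suc j) (Suc k) = (M j k :: complex)"
  shows "j + t < N \<Longrightarrow> k + t < N \<Longrightarrow> M (j + t) (k + t) = M j k"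
proof (induction t)
  case 0 thus ?case by simp
next
  case (Suc t)
  have "M (j + Suc t) (k + Suc t) = M (Suc (j + t)) (Suc (k + t))" by simp
  also have "\<dots> = M (j + t) (k + t)" using T Suc.prems by simp
  also have "\<dots> = M j k" using Suc by simp
  finally show ?case .
qed

lemma Psym_Toep:
  fixes M :: "nat \<Rightarrow> nat \<Rightarrow> complex"
  shows "(\<forall>n\<in>{1..N}. \<forall>i<n. \<forall>k<n. M (n - Suc i) (n - Suc k) = M k i) \<longleftrightarrow>
         (\<forall>j k. Suc j < N \<longrightarrow> Suc k < N \<longrightarrow> M (Suc j) (Suc k) = M j k)"
proof
  assume P: "\<forall>n\<in>{1..N}. \<forall>i<n. \<forall>k<n. M (n - Suc i) (n - Suc k) = M k i"
  show "\<forall>j k. Suc j < N \<longrightarrow> Suc k < N \<longrightarrow> M (Suc j) (Suc k) = M j k"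
  proof (intro allI impI)
    fix j k assume j: "Suc j < N" and k: "Suc k < N"
    define n where "n = N - 1"
    have N: "N = Suc n" and jn: "j < n" and kn: "k < n" using j k unfolding n_def by auto
    have "M (N - Suc (n - Suc j)) (N - Suc (n - Suc k)) = M (n - Suc k) (n - Suc j)"
      using P[rule_format, of N "n - Suc j" "n - Suc k"] N jn kn by auto
    moreover have "N - Suc (n - Suc j) = Suc j" "N - Suc (n - Suc k) = Suc k" using N jn kn by auto
    moreover have "M (n - Suc (n - Suc j)) (n - Suc (n - Suc k)) = M (n - Suc k) (n - Suc j)"
      using P[rule_format, of n "n - Suc j" "n - Suc k"] N jn kn by auto
    moreover have "n - Suc (n - Suc j) = j" "n - Suc (n - Suc k) = k" using jn kn by auto
    ultimately show "M (Suc j) (Suc k) = M j k" by simp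
  qed
next
  assume T: "\<forall>j k. Suc j < N \<longrightarrow> Suc k < N \<longrightarrow> M (Suc j) (Suc k) = M j k"
  show "\<forall>n\<in>{1..N}. \<forall>i<n. \<forall>k<n. M (n - Suc i) (n - Suc k) = M k i"
  proof (intro ballI allI impI)
    fix n i k assume n: "n \<in> {1..N}" and i: "i < n" and k: "k < n"
    show "M (n - Suc i) (n - Suc k) = M k i"
    proof (cases "i + k < n")
      case True
      define t where "t = n - Suc i - k"
      have "k + t = n - Suc i" "i + t = n - Suc k" using True unfolding t_def by auto
      moreover have "M (k + t) (i + t) = M k i"
        by (rule Toep_shift[OF T]) (use True n i k in \<open>auto simp: t_def\<close>)
      ultimately show ?thesis by simp
    next
      case False
      define t where "t = i + k - (n - 1)"
      have "(n - Suc i) + t = k" "(n - Suc k) + t = i" using False i k unfolding t_def by auto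
      moreover have "M ((n - Suc i) + t) ((n - Suc k) + t) = M (n - Suc i) (n - Suc k)"
        by (rule Toep_shift[OF T]) (use False n i k in \<open>auto simp: t_def\<close>)
      ultimately show ?thesis by simp
    qed
  qed
qed

locale setting =
  fixes a :: complex and N :: nat and A :: "seq \<Rightarrow> seq"
  assumes a1: "cmod a < 1"
    and lin: "linear_operator_on (K2 (bp a N)) A"
begin

definition M :: "nat \<Rightarrow> nat \<Rightarrow> complex" where "M j k = ip (A (ek a k)) (ek a j)"

lemma AS: "f \<in> K2 (bp a N) \<Longrightarrow> A f \<in> K2 (bp a N)"
  using lin unfolding linear_operator_on_def by auto

lemma Alin: "f \<in> K2 (bp a N) \<Longrightarrow> g \<in> K2 (bp a N) \<Longrightarrow> A (\<lambda>n. c * f n + g n) = (\<lambda>n. c * A f n + A g n)"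
  using lin unfolding linear_operator_on_def by auto

lemma zeroS: "(\<lambda>m. 0) \<in> K2 (bp a N)"
  using comb_K2[OF a1, of N N "\<lambda>k. 0"] by (simp add: comb_zero)

lemma A0: "A (\<lambda>m. 0) = (\<lambda>m. 0)"
  using Alin[OF zeroS zeroS, of "-1"] by simp

lemma Aek: "k < N \<Longrightarrow> A (ek a k) = comb a N (\<lambda>j. M j k)"
  unfolding M_def by (rule K2_repr[OF a1 AS[OF ek_S[OF a1]]])

lemma Acomb: "n \<le> N \<Longrightarrow> A (comb a n c) = comb a N (\<lambda>j. \<Sum>k<n. M j k * c k)"
proof (induction n)
  case 0 thus ?case by (simp add: comb_0 A0 comb_zero)
next
  case (Suc n)
  have "A (comb a (Suc n) c) = A (\<lambda>m. c n * ek a n m + comb a n c m)" by (simp add: comb_Suc)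
  also have "\<dots> = (\<lambda>m. c n * A (ek a n) m + A (comb a n c) m)"
    by (rule Alin) (use Suc.prems ek_S[OF a1] comb_K2[OF a1] in auto)
  also have "\<dots> = (\<lambda>m. c n * comb a N (\<lambda>j. M j n) m + comb a N (\<lambda>j. \<Sum>k<n. M j k * c k) m)"
    using Suc by (simp add: Aek)
  also have "\<dots> = comb a N (\<lambda>j. c n * M j n + (\<Sum>k<n. M j k * c k))" by (rule comb_lin)
  also have "\<dots> = comb a N (\<lambda>j. \<Sum>k<Suc n. M j k * c k)" by (simp add: mult.commute add.commute)
  finally show ?case .
qed

lemma L2_K2: "f \<in> K2 \<theta> \<Longrightarrow> f \<in> L2" unfolding K2_def H2_iff by auto

lemma Tn: assumes "n \<le> N"
  shows "proj (K2 (bp a n)) (A (comb a n c)) = comb a n (\<lambda>j. \<Sum>k<n. M j k * c k)"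
proof -
  have "A (comb a n c) \<in> L2" by (rule L2_K2[OF AS[OF comb_K2[OF a1 assms]]])
  hence "proj (K2 (bp a n)) (A (comb a n c)) = comb a n (\<lambda>j. ip (A (comb a n c)) (ek a j))"
    by (rule proj_S[OF a1])
  also have "\<dots> = comb a n (\<lambda>j. \<Sum>k<n. M j k * c k)"
    by (rule comb_cong) (use assms in \<open>simp add: Acomb ip_comb_ek[OF a1]\<close>)
  finally show ?thesis .
qed

lemma cond_iff: assumes n: "n \<le> N"
  shows "(\<forall>f\<in>K2 (bp a n). conjC (bp a n) ((\<lambda>g. proj (K2 (bp a n)) (A g)) (conjC (bp a n) f))
           = adjoint_on (K2 (bp a n)) (\<lambda>g. proj (K2 (bp a n)) (A g)) f)
        \<longleftrightarrow> (\<forall>i<n. \<forall>k<n. M (n - Suc i) (n - Suc k) = M k i)"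
proof -
  let ?T = "\<lambda>g. proj (K2 (bp a n)) (A g)"
  have T: "\<And>c. ?T (comb a n c) = comb a n (\<lambda>j. \<Sum>k<n. M j k * c k)" by (rule Tn[OF n])
  define X where "X d i = (\<Sum>k<n. cnj (M (n - Suc i) (n - Suc k)) * d k)" for d i
  define Y where "Y d i = (\<Sum>k<n. cnj (M k i) * d k)" for d i
  have LHS: "conjC (bp a n) (?T (conjC (bp a n) (comb a n d))) = comb a n (X d)" for d
  proof -
    have "conjC (bp a n) (?T (conjC (bp a n) (comb a n d))) =
          comb a n (\<lambda>i. cnj (\<Sum>k<n. M (n - Suc i) k * cnj (d (n - Suc k))))"
      by (simp only: conjC_comb[OF a1] T)
    also have "\<dots> = comb a n (X d)"
    proof (rule comb_cong)
      fix i
      have "cnj (\<Sum>k<n. M (n - Suc i) k * cnj (d (n - Suc k))) =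
            (\<Sum>k<n. cnj (M (n - Suc i) k) * d (n - Suc k))" by simp
      also have "\<dots> = (\<Sum>k<n. cnj (M (n - Suc i) (n - Suc (n - Suc k))) * d (n - Suc k))"
        by (intro sum.cong) auto
      also have "\<dots> = X d i" unfolding X_def
        by (rule sum.nat_diff_reindex[where g="\<lambda>k. cnj (M (n - Suc i) (n - Suc k)) * d k"])
      finally show "cnj (\<Sum>k<n. M (n - Suc i) k * cnj (d (n - Suc k))) = X d i" .
    qed
    finally show ?thesis .
  qed
  have RHS: "adjoint_on (K2 (bp a n)) ?T (comb a n d) = comb a n (Y d)" for d
    unfolding Y_def by (rule adj_S[OF a1 T refl])
  have "(\<forall>f\<in>K2 (bp a n). conjC (bp a n) (?T (conjC (bp a n) f)) = adjoint_on (K2 (bp a n)) ?T f)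
        \<longleftrightarrow> (\<forall>d. comb a n (X d) = comb a n (Y d))"
  proof
    assume h: "\<forall>f\<in>K2 (bp a n). conjC (bp a n) (?T (conjC (bp a n) f)) = adjoint_on (K2 (bp a n)) ?T f"
    show "\<forall>d. comb a n (X d) = comb a n (Y d)"
    proof
      fix d
      have "comb a n d \<in> K2 (bp a n)" by (rule comb_K2[OF a1]) simp
      from h[rule_format, OF this] show "comb a n (X d) = comb a n (Y d)" by (simp only: LHS RHS)
    qed
  next
    assume h: "\<forall>d. comb a n (X d) = comb a n (Y d)"
    show "\<forall>f\<in>K2 (bp a n). conjC (bp a n) (?T (conjC (bp a n) f)) = adjoint_on (K2 (bp a n)) ?T f"
    proof
      fix f assume "f \<in> K2 (bp a n)"
      then obtain d where d: "f = comb a n d" using K2_iff[OF a1] by blast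
      show "conjC (bp a n) (?T (conjC (bp a n) f)) = adjoint_on (K2 (bp a n)) ?T f"
        unfolding d by (simp only: LHS RHS h)
    qed
  qed
  also have "\<dots> \<longleftrightarrow> (\<forall>d. \<forall>i<n. X d i = Y d i)" by (simp add: comb_eq_iff[OF a1])
  also have "\<dots> \<longleftrightarrow> (\<forall>i<n. \<forall>k<n. M (n - Suc i) (n - Suc k) = M k i)"
  proof
    assume h: "\<forall>d. \<forall>i<n. X d i = Y d i"
    show "\<forall>i<n. \<forall>k<n. M (n - Suc i) (n - Suc k) = M k i"
    proof (intro allI impI)
      fix i k assume i: "i < n" and k: "k < n"
      have "X (\<lambda>j. if j = k then 1 else 0) i = Y (\<lambda>j. if j = k then 1 else 0) i" using h i by blast
      moreover have "X (\<lambda>j. if j = k then 1 else 0) i = cnj (M (n - Suc i) (n - Suc k))"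
        unfolding X_def using k by (simp add: if_distrib cong: if_cong)
      moreover have "Y (\<lambda>j. if j = k then 1 else 0) i = cnj (M k i)"
        unfolding Y_def using k by (simp add: if_distrib cong: if_cong)
      ultimately show "M (n - Suc i) (n - Suc k) = M k i" by simp
    qed
  next
    assume h: "\<forall>i<n. \<forall>k<n. M (n - Suc i) (n - Suc k) = M k i"
    show "\<forall>d. \<forall>i<n. X d i = Y d i"
      unfolding X_def Y_def using h by (auto intro!: sum.cong)
  qed
  finally show ?thesis .
qed

end

context setting
begin

lemma TTO_Toep: assumes "TTO (bp a N) A"
  shows "\<forall>j k. Suc j < N \<longrightarrow> Suc k < N \<longrightarrow> M (Suc j) (Suc k) = M j k"
proof -
  obtain \<phi> where \<phi>: "\<phi> \<in> L2"
    and hA: "\<forall>f\<in>K2 (bp a N). mult \<phi> f \<in> L2 \<longrightarrow> A f = proj (K2 (bp a N)) (mult \<phi> f)"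
    using assms unfolding TTO_def by blast
  define Q where "Q j k = ip (mult \<phi> (ek a k)) (ek a j)" for j k
  have mL: "mult \<phi> (ek a k) \<in> L2" for k using young[OF l1_ek[OF a1] \<phi>] by (simp add: mult_comm)
  have MQ: "M j k = Q j k" if "j < N" "k < N" for j k
  proof -
    have "A (ek a k) = proj (K2 (bp a N)) (mult \<phi> (ek a k))"
      using hA ek_S[OF a1 that(2)] mL by blast
    also have "\<dots> = comb a N (\<lambda>i. ip (mult \<phi> (ek a k)) (ek a i))" by (rule proj_S[OF a1 mL])
    finally show ?thesis unfolding M_def Q_def using that by (simp add: ip_comb_ek[OF a1])
  qed
  have QS: "Q (Suc j) (Suc k) = Q j k" for j k
  proof -
    have "mult \<phi> (ek a (Suc k)) = mult (bs a) (mult \<phi> (ek a k))"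
    proof -
      have "mult \<phi> (ek a (Suc k)) = mult (mult (bs a) (ek a k)) \<phi>"
        by (simp add: ek_Suc[OF a1] mult_comm)
      also have "\<dots> = mult (bs a) (mult (ek a k) \<phi>)"
        by (rule massoc) (use a1 l1_bs l1_ek \<phi> L2_bnd in auto)
      finally show ?thesis by (simp add: mult_comm[of "ek a k"])
    qed
    hence "Q (Suc j) (Suc k) = ip (mult (bs a) (mult \<phi> (ek a k))) (mult (bs a) (ek a j))"
      unfolding Q_def by (simp add: ek_Suc[OF a1])
    also have "\<dots> = Q j k" unfolding Q_def by (rule iso_bs[OF a1 mL L2_ek[OF a1]])
    finally show ?thesis .
  qed
  show ?thesis using MQ QS by simp
qed

lemma Toep_TTO: assumes T: "\<forall>j k. Suc j < N \<longrightarrow> Suc k < N \<longrightarrow> M (Suc j) (Suc k) = M j k"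
  shows "TTO (bp a N) A"
proof -
  define t where "t d = (if 0 \<le> d then M (nat d) 0 else M 0 (nat (- d)))" for d :: int
  have Mt: "M j k = t (int j - int k)" if "j < N" "k < N" for j k
  proof (cases "k \<le> j")
    case True
    have "M ((j - k) + k) (0 + k) = M (j - k) 0" by (rule Toep_shift[OF T]) (use that True in auto)
    thus ?thesis unfolding t_def using True by (simp add: of_nat_diff nat_diff_distrib)
  next
    case False
    have "M (0 + j) ((k - j) + j) = M 0 (k - j)" by (rule Toep_shift[OF T]) (use that False in auto)
    thus ?thesis unfolding t_def using False by (simp add: nat_diff_distrib)
  qed
  define S1 where "S1 = (\<lambda>m. \<Sum>d<N. t (int d) * bp a d m)"
  define S2 where "S2 = (\<lambda>m. \<Sum>d\<in>{1..<N}. t (- int d) * Jc (bp a d) m)"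
  define \<phi> where "\<phi> = (\<lambda>m. 1 * S1 m + S2 m)"
  have l1S1: "l1 S1" unfolding S1_def by (intro l1_sum l1_bp a1) auto
  have l1S2: "l1 S2" unfolding S2_def by (intro l1_sum Jc_l1 l1_bp a1) auto
  have l1\<phi>: "l1 \<phi>" unfolding \<phi>_def by (intro l1_lin l1S1 l1S2)
  have L2\<phi>: "\<phi> \<in> L2" by (rule l1_L2[OF l1\<phi>])
  have key: "ip (mult \<phi> (ek a k)) (ek a j) = M j k" if j: "j < N" and k: "k < N" for j k
  proof -
    have ekL: "ek a k \<in> L2" by (rule L2_ek[OF a1])
    have JL: "mult (Jc (bp a d)) (ek a k) \<in> L2" for d by (intro young Jc_l1 l1_bp a1 ekL)
    define X where "X = (\<lambda>m. \<Sum>d<N. t (int d) * ek a (d + k) m)"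
    define Y where "Y = (\<lambda>m. \<Sum>d\<in>{1..<N}. t (- int d) * mult (Jc (bp a d)) (ek a k) m)"
    have XL: "X \<in> L2" unfolding X_def by (intro L2_sum L2_ek[OF a1]) auto
    have YL: "Y \<in> L2" unfolding Y_def by (intro L2_sum JL) auto
    have "mult \<phi> (ek a k) = mult (ek a k) \<phi>" by (rule mult_comm)
    also have "\<dots> = (\<lambda>m. 1 * mult (ek a k) S1 m + mult (ek a k) S2 m)"
      unfolding \<phi>_def by (rule mult_lin2) (use ekL l1S1 l1S2 l1_L2 in auto)
    also have "mult (ek a k) S1 = X"
    proof -
      have "mult (ek a k) S1 = (\<lambda>m. \<Sum>d<N. t (int d) * mult (ek a k) (bp a d) m)"
        unfolding S1_def by (rule mult_sum2) (use ekL l1_bp[OF a1] l1_L2 in auto)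
      also have "\<dots> = X" unfolding X_def by (simp add: mult_comm[of "ek a k"] ek_add[OF a1])
      finally show ?thesis .
    qed
    also have "mult (ek a k) S2 = Y"
    proof -
      have "mult (ek a k) S2 = (\<lambda>m. \<Sum>d\<in>{1..<N}. t (- int d) * mult (ek a k) (Jc (bp a d)) m)"
        unfolding S2_def by (rule mult_sum2) (use ekL l1_bp[OF a1] Jc_l1 l1_L2 in auto)
      also have "\<dots> = Y" unfolding Y_def by (simp add: mult_comm[of "ek a k"])
      finally show ?thesis .
    qed
    finally have "ip (mult \<phi> (ek a k)) (ek a j) = ip (\<lambda>m. 1 * X m + Y m) (ek a j)" by simp
    also have "\<dots> = ip X (ek a j) + ip Y (ek a j)"
      using ip_lin1[OF XL YL L2_ek[OF a1], of 1] by simp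
    also have "ip X (ek a j) = (\<Sum>d<N. t (int d) * (if d + k = j then 1 else 0))"
      unfolding X_def by (subst ip_sum1) (auto simp: L2_ek[OF a1] ek_orth[OF a1])
    also have "ip Y (ek a j) = (\<Sum>d\<in>{1..<N}. t (- int d) * (if k = d + j then 1 else 0))"
    proof -
      have "ip Y (ek a j) = (\<Sum>d\<in>{1..<N}. t (- int d) * ip (mult (Jc (bp a d)) (ek a k)) (ek a j))"
        unfolding Y_def by (rule ip_sum1) (use JL L2_ek[OF a1] in auto)
      also have "\<dots> = (\<Sum>d\<in>{1..<N}. t (- int d) * (if k = d + j then 1 else 0))"
      proof (intro sum.cong refl)
        fix d
        have "ip (mult (Jc (bp a d)) (ek a k)) (ek a j) = ip (ek a k) (mult (Jc (Jc (bp a d))) (ek a j))"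
          by (rule mult_adj) (use Jc_l1 l1_bp[OF a1] L2_ek[OF a1] in auto)
        also have "\<dots> = ip (ek a k) (ek a (d + j))" by (simp add: Jc_Jc ek_add[OF a1])
        finally show "t (- int d) * ip (mult (Jc (bp a d)) (ek a k)) (ek a j) = t (- int d) * (if k = d + j then 1 else 0)"
          by (simp add: ek_orth[OF a1])
      qed
      finally show ?thesis .
    qed
    also have "(\<Sum>d<N. t (int d) * (if d + k = j then 1 else 0)) + (\<Sum>d\<in>{1..<N}. t (- int d) * (if k = d + j then 1 else 0))
             = t (int j - int k)"
    proof (cases "k \<le> j")
      case True
      have "(\<Sum>d<N. t (int d) * (if d + k = j then 1 else 0)) = (\<Sum>d<N. if d = j - k then t (int d) else 0)"
        by (intro sum.cong) (use True in auto)
      also have "\<dots> = t (int (j - k))" using j by (simp add: sum.delta')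
      finally have 1: "(\<Sum>d<N. t (int d) * (if d + k = j then 1 else 0)) = t (int j - int k)"
        using True by (simp add: of_nat_diff)
      have 2: "(\<Sum>d\<in>{1..<N}. t (- int d) * (if k = d + j then 1 else 0)) = 0"
        by (intro sum.neutral) (use True in auto)
      show ?thesis using 1 2 by simp
    next
      case False
      have 1: "(\<Sum>d<N. t (int d) * (if d + k = j then 1 else 0)) = 0"
        by (intro sum.neutral) (use False in auto)
      have "(\<Sum>d\<in>{1..<N}. t (- int d) * (if k = d + j then 1 else 0)) = (\<Sum>d\<in>{1..<N}. if d = k - j then t (- int d) else 0)"
        by (intro sum.cong) (use False in auto)
      also have "\<dots> = t (- int (k - j))"
      proof -
        have mem: "k - j \<in> {1..<N}" using k False by auto
        show ?thesis using mem by (simp add: sum.delta)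
      qed
      finally have 2: "(\<Sum>d\<in>{1..<N}. t (- int d) * (if k = d + j then 1 else 0)) = t (int j - int k)"
        using False by (simp add: of_nat_diff)
      show ?thesis using 1 2 by simp
    qed
    also have "\<dots> = M j k" by (rule Mt[symmetric, OF j k])
    finally show ?thesis .
  qed
  have P1: "\<forall>f\<in>K2 (bp a N). mult \<phi> f \<in> L2 \<longrightarrow> A f = proj (K2 (bp a N)) (mult \<phi> f)"
  proof (intro ballI impI)
    fix f assume f: "f \<in> K2 (bp a N)" and "mult \<phi> f \<in> L2"
    obtain c where c: "f = comb a N c" using f K2_iff[OF a1] by blast
    have mL: "mult \<phi> (ek a k) \<in> L2" for k by (intro young l1\<phi> L2_ek[OF a1])
    have "proj (K2 (bp a N)) (mult \<phi> f) = comb a N (\<lambda>j. ip (mult \<phi> f) (ek a j))"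
      by (rule proj_S[OF a1 young[OF l1\<phi> L2_K2[OF f]]])
    also have "\<dots> = comb a N (\<lambda>j. \<Sum>k<N. M j k * c k)"
    proof (rule comb_cong)
      fix j assume j: "j < N"
      have "mult \<phi> f = (\<lambda>m. \<Sum>k<N. c k * mult \<phi> (ek a k) m)"
        unfolding c comb_def by (rule mult_sum2) (use L2\<phi> L2_ek[OF a1] in auto)
      hence "ip (mult \<phi> f) (ek a j) = (\<Sum>k<N. c k * ip (mult \<phi> (ek a k)) (ek a j))"
        by (simp add: ip_sum1 mL L2_ek[OF a1])
      also have "\<dots> = (\<Sum>k<N. M j k * c k)" by (intro sum.cong) (simp_all add: key j mult.commute)
      finally show "ip (mult \<phi> f) (ek a j) = (\<Sum>k<N. M j k * c k)" .
    qed
    also have "\<dots> = A f" unfolding c by (rule Acomb[symmetric]) simp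
    finally show "A f = proj (K2 (bp a N)) (mult \<phi> f)" ..
  qed
  have P2: "\<forall>f\<in>K2 (bp a N). \<forall>e>0. \<exists>g\<in>K2 (bp a N). mult \<phi> g \<in> L2 \<and> l2norm (\<lambda>n. f n - g n) < e"
  proof (intro ballI allI impI)
    fix f and e :: real assume f: "f \<in> K2 (bp a N)" and e: "e > 0"
    show "\<exists>g\<in>K2 (bp a N). mult \<phi> g \<in> L2 \<and> l2norm (\<lambda>n. f n - g n) < e"
      using f e young[OF l1\<phi> L2_K2[OF f]] by (intro bexI[of _ f]) (auto simp: l2norm_def)
  qed
  have P3: "\<exists>B. \<forall>f\<in>K2 (bp a N). l2norm (A f) \<le> B * l2norm f"
  proof -
    define K where "K = (\<Sum>j<N. (\<Sum>k<N. cmod (M j k))\<^sup>2)"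
    show "\<exists>B. \<forall>f\<in>K2 (bp a N). l2norm (A f) \<le> B * l2norm f"
    proof (intro exI ballI)
      fix f assume f: "f \<in> K2 (bp a N)"
      obtain c where c: "f = comb a N c" using f K2_iff[OF a1] by blast
      define s2 where "s2 = (\<Sum>k<N. (cmod (c k))\<^sup>2)"
      have s20: "s2 \<ge> 0" unfolding s2_def by (intro sum_nonneg) auto
      have ck: "cmod (c k) \<le> sqrt s2" if "k < N" for k
      proof -
        have "(cmod (c k))\<^sup>2 \<le> s2" unfolding s2_def
          by (rule member_le_sum[where f="\<lambda>k. (cmod (c k))\<^sup>2"]) (use that in auto)
        thus ?thesis by (simp add: real_le_rsqrt)
      qed
      have nf: "l2norm f = sqrt s2" unfolding l2norm_def c s2_def
        using nsq_comb[OF a1] unfolding nsq_def by simp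
      have "l2norm (A f) = sqrt (\<Sum>j<N. (cmod (\<Sum>k<N. M j k * c k))\<^sup>2)"
        unfolding l2norm_def c Acomb[OF order_refl] using nsq_comb[OF a1] unfolding nsq_def by simp
      also have "\<dots> \<le> sqrt (K * s2)"
      proof (rule real_sqrt_le_mono)
        have "(cmod (\<Sum>k<N. M j k * c k))\<^sup>2 \<le> (\<Sum>k<N. cmod (M j k))\<^sup>2 * s2" for j
        proof -
          have "cmod (\<Sum>k<N. M j k * c k) \<le> (\<Sum>k<N. cmod (M j k) * cmod (c k))"
            by (rule order_trans[OF norm_sum]) (simp add: norm_mult)
          also have "\<dots> \<le> (\<Sum>k<N. cmod (M j k) * sqrt s2)"
            by (intro sum_mono mult_left_mono ck) auto
          also have "\<dots> = (\<Sum>k<N. cmod (M j k)) * sqrt s2" by (simp add: sum_distrib_right)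
          finally have "cmod (\<Sum>k<N. M j k * c k) \<le> (\<Sum>k<N. cmod (M j k)) * sqrt s2" .
          hence "(cmod (\<Sum>k<N. M j k * c k))\<^sup>2 \<le> ((\<Sum>k<N. cmod (M j k)) * sqrt s2)\<^sup>2"
            by (intro power_mono) auto
          also have "\<dots> = (\<Sum>k<N. cmod (M j k))\<^sup>2 * s2" using s20 by (simp add: power_mult_distrib)
          finally show ?thesis .
        qed
        hence "(\<Sum>j<N. (cmod (\<Sum>k<N. M j k * c k))\<^sup>2) \<le> (\<Sum>j<N. (\<Sum>k<N. cmod (M j k))\<^sup>2 * s2)"
          by (intro sum_mono)
        thus "(\<Sum>j<N. (cmod (\<Sum>k<N. M j k * c k))\<^sup>2) \<le> K * s2"
          unfolding K_def by (simp add: sum_distrib_right)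
      qed
      also have "\<dots> = sqrt K * l2norm f" by (simp add: nf real_sqrt_mult)
      finally show "l2norm (A f) \<le> sqrt K * l2norm f" .
    qed
  qed
  show ?thesis unfolding TTO_def using L2\<phi> P1 P2 P3 by blast
qed

lemma TTO_iff: "TTO (bp a N) A \<longleftrightarrow> (\<forall>j k. Suc j < N \<longrightarrow> Suc k < N \<longrightarrow> M (Suc j) (Suc k) = M j k)"
  using TTO_Toep Toep_TTO by blast

end

theorem proposition3p2:
  fixes a :: complex and N :: nat and A :: "seq \<Rightarrow> seq"
  assumes "cmod a < 1"
    and "linear_operator_on (K2 (bpow a N)) A"
  shows "TTO (bpow a N) A \<longleftrightarrow>
    (\<forall>n \<in> {1..N}.
       \<forall>f \<in> K2 (bpow a n).
         conjC (bpow a n) ((\<lambda>g. proj (K2 (bpow a n)) (A g)) (conjC (bpow a n) f))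
         = adjoint_on (K2 (bpow a n)) (\<lambda>g. proj (K2 (bpow a n)) (A g)) f)"
proof -
  have bb: "\<And>n. bpow a n = bp a n" by (rule bpow_bp[OF assms(1)])
  interpret setting a N A
    by unfold_locales (use assms bb in auto)
  have "(\<forall>n \<in> {1..N}.
       \<forall>f \<in> K2 (bp a n).
         conjC (bp a n) ((\<lambda>g. proj (K2 (bp a n)) (A g)) (conjC (bp a n) f))
         = adjoint_on (K2 (bp a n)) (\<lambda>g. proj (K2 (bp a n)) (A g)) f)
       \<longleftrightarrow> (\<forall>n\<in>{1..N}. \<forall>i<n. \<forall>k<n. M (n - Suc i) (n - Suc k) = M k i)"
    using cond_iff by auto
  also have "\<dots> \<longleftrightarrow> (\<forall>j k. Suc j < N \<longrightarrow> Suc k < N \<longrightarrow> M (Suc j) (Suc k) = M j k)"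
    by (rule Psym_Toep)
  also have "\<dots> \<longleftrightarrow> TTO (bp a N) A" by (rule TTO_iff[symmetric])
  finally show ?thesis unfolding bb by blast
qed



end
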